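(* Let $A$ be a finite set, $n\in\mathbb{N}$ and $r>0$. If $\mu\in\Pr(A^n)$ does not satisfy $\mathrm{T}(rn/200,r)$, then there is a fuzzy partition $(\rho_1,\rho_2)$ on $A^n$ such that $\mathrm{I}_\mu(\rho_1,\rho_2)\ge r^2n^{-1}e^{-n}$ and $$\langle\rho_1\rangle\,\mathrm{DTC}(\mu_{|\rho_1})+\langle\rho_2\rangle\,\mathrm{DTC}(\mu_{|\rho_2})\le\mathrm{DTC}(\mu)-\tfrac12\mathrm{I}_\mu(\rho_1,\rho_2).$$
   Context: $\langle\cdot\rangle$ denotes integration with respect to $\mu$. A fuzzy partition is a tuple of functions $A^n\to[0,1]$ summing to $1$. $\mu_{|\rho}:=\rho\mu/\langle\rho\rangle$ (a term $\langle\rho\rangle\,\mathrm{DTC}(\mu_{|\rho})$ with $\langle\rho\rangle=0$ is read as $0$). $\mathrm{I}_\mu(\rho_1,\dots,\rho_k)=\sum_j\langle\rho_j\rangle\mathrm{D}(\mu_{|\rho_j}\|\mu)$, the mutual information between $\xi\sim\mu$ and a label $\zeta$ with $\mathbb{P}(\zeta=j,\xi=\mathbf x)=\rho_j(\mathbf x)\mu(\mathbf x)$. For $\xi=(\xi_1,\dots,\xi_n)\sim\mu$, $\mathrm{DTC}(\mu)=\mathrm{H}(\xi)-\sum_i\mathrm{H}(\xi_i|\xi_{[n]\setminus\{i\}})$. $A^n$ has normalized Hamming metric $d_n$, with transportation metric $\overline{d_n}$; $\mu$ satisfies $\mathrm{T}(\kappa,r)$ if $\overline{d_n}(\nu,\mu)\le\frac1\kappa\mathrm{D}(\nu\|\mu)+r$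 for all $\nu\in\Pr(A^n)$, $\mathrm{D}$ being KL divergence. *)

theory Defs
  imports Complex_Main "HOL-Library.FuncSet"
begin

text \<open>The finite alphabet A is a finite type 'a. Words of length n are functions
  nat => 'a, extensional outside {..<n}. Measures on A^n are real-valued functions
  on words, supported on the word space. Logarithms are natural.\<close>

definition words :: "nat \<Rightarrow> (nat \<Rightarrow> 'a) set" where
  "words n = PiE {..<n} (\<lambda>_. UNIV)"

definition is_prob :: "nat \<Rightarrow> ((nat \<Rightarrow> 'a::finite) \<Rightarrow> real) \<Rightarrow> bool" where
  "is_prob n \<mu> \<longleftrightarrow> (\<forall>x. 0 \<le> \<mu> x) \<and> (\<forall>x. x \<notin> words n \<longrightarrow> \<mu> x = 0)
     \<and> (\<Sum>x\<in>words n. \<mu> x) = 1"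

definition hamming :: "nat \<Rightarrow> (nat \<Rightarrow> 'a) \<Rightarrow> (nat \<Rightarrow> 'a) \<Rightarrow> real" where
  "hamming n x y = real (card {i. i < n \<and> x i \<noteq> y i}) / real n"

definition coupling :: "nat \<Rightarrow> ((nat \<Rightarrow> 'a::finite) \<times> (nat \<Rightarrow> 'a) \<Rightarrow> real)
   \<Rightarrow> ((nat \<Rightarrow> 'a) \<Rightarrow> real) \<Rightarrow> ((nat \<Rightarrow> 'a) \<Rightarrow> real) \<Rightarrow> bool" where
  "coupling n \<pi> \<nu> \<mu> \<longleftrightarrow> (\<forall>z. 0 \<le> \<pi> z) \<and> (\<forall>z. z \<notin> words n \<times> words n \<longrightarrow> \<pi> z = 0)
     \<and> (\<forall>x\<in>words n. (\<Sum>y\<in>words n. \<pi> (x, y)) = \<nu> x)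
     \<and> (\<forall>y\<in>words n. (\<Sum>x\<in>words n. \<pi> (x, y)) = \<mu> y)"

definition transport_dist :: "nat \<Rightarrow> ((nat \<Rightarrow> 'a::finite) \<Rightarrow> real) \<Rightarrow> ((nat \<Rightarrow> 'a) \<Rightarrow> real) \<Rightarrow> real" where
  "transport_dist n \<nu> \<mu> = Inf {(\<Sum>z\<in>words n \<times> words n. \<pi> z * hamming n (fst z) (snd z)) | \<pi>. coupling n \<pi> \<nu> \<mu>}"

text \<open>KL divergence (finite when \<nu> is absolutely continuous w.r.t. \<mu>; with 0 ln 0 = 0).\<close>
definition abs_cont :: "nat \<Rightarrow> ((nat \<Rightarrow> 'a) \<Rightarrow> real) \<Rightarrow> ((nat \<Rightarrow> 'a) \<Rightarrow> real) \<Rightarrow> bool" where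
  "abs_cont n \<nu> \<mu> \<longleftrightarrow> (\<forall>x\<in>words n. \<mu> x = 0 \<longrightarrow> \<nu> x = 0)"

definition KL :: "nat \<Rightarrow> ((nat \<Rightarrow> 'a::finite) \<Rightarrow> real) \<Rightarrow> ((nat \<Rightarrow> 'a) \<Rightarrow> real) \<Rightarrow> real" where
  "KL n \<nu> \<mu> = (\<Sum>x\<in>words n. \<nu> x * ln (\<nu> x / \<mu> x))"

text \<open>T(kappa, r); when \<nu> is not absolutely continuous, D = infinity and the inequality is trivial.\<close>
definition transport_ineq :: "nat \<Rightarrow> ((nat \<Rightarrow> 'a::finite) \<Rightarrow> real) \<Rightarrow> real \<Rightarrow> real \<Rightarrow> bool" where
  "transport_ineq n \<mu> \<kappa> r \<longleftrightarrow> (\<forall>\<nu>. is_prob n \<nu> \<longrightarrow> abs_cont n \<nu> \<mu> \<longrightarrow>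
      transport_dist n \<nu> \<mu> \<le> (1 / \<kappa>) * KL n \<nu> \<mu> + r)"

definition entropy :: "nat \<Rightarrow> ((nat \<Rightarrow> 'a::finite) \<Rightarrow> real) \<Rightarrow> real" where
  "entropy n \<mu> = - (\<Sum>x\<in>words n. \<mu> x * ln (\<mu> x))"

definition marg_off :: "nat \<Rightarrow> nat \<Rightarrow> ((nat \<Rightarrow> 'a::finite) \<Rightarrow> real) \<Rightarrow> (nat \<Rightarrow> 'a) \<Rightarrow> real" where
  "marg_off n i \<mu> x = (\<Sum>y\<in>{y\<in>words n. \<forall>j. j \<noteq> i \<longrightarrow> y j = x j}. \<mu> y)"

definition cond_entropy :: "nat \<Rightarrow> nat \<Rightarrow> ((nat \<Rightarrow> 'a::finite) \<Rightarrow> real) \<Rightarrow> real" where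
  "cond_entropy n i \<mu> = - (\<Sum>x\<in>words n. \<mu> x * ln (\<mu> x / marg_off n i \<mu> x))"

definition DTC :: "nat \<Rightarrow> ((nat \<Rightarrow> 'a::finite) \<Rightarrow> real) \<Rightarrow> real" where
  "DTC n \<mu> = entropy n \<mu> - (\<Sum>i<n. cond_entropy n i \<mu>)"

definition fuzzy_partition2 :: "nat \<Rightarrow> ((nat \<Rightarrow> 'a) \<Rightarrow> real) \<Rightarrow> ((nat \<Rightarrow> 'a) \<Rightarrow> real) \<Rightarrow> bool" where
  "fuzzy_partition2 n \<rho>1 \<rho>2 \<longleftrightarrow> (\<forall>x\<in>words n. 0 \<le> \<rho>1 x \<and> \<rho>1 x \<le> 1 \<and> 0 \<le> \<rho>2 x \<and> \<rho>2 x \<le> 1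
      \<and> \<rho>1 x + \<rho>2 x = 1)"

definition integ :: "nat \<Rightarrow> ((nat \<Rightarrow> 'a::finite) \<Rightarrow> real) \<Rightarrow> ((nat \<Rightarrow> 'a) \<Rightarrow> real) \<Rightarrow> real" where
  "integ n \<mu> \<rho> = (\<Sum>x\<in>words n. \<rho> x * \<mu> x)"

definition cond_meas :: "nat \<Rightarrow> ((nat \<Rightarrow> 'a::finite) \<Rightarrow> real) \<Rightarrow> ((nat \<Rightarrow> 'a) \<Rightarrow> real) \<Rightarrow> (nat \<Rightarrow> 'a) \<Rightarrow> real" where
  "cond_meas n \<mu> \<rho> x = \<rho> x * \<mu> x / integ n \<mu> \<rho>"

definition mutual_info2 :: "nat \<Rightarrow> ((nat \<Rightarrow> 'a::finite) \<Rightarrow> real) \<Rightarrow> ((nat \<Rightarrow> 'a) \<Rightarrow> real) \<Rightarrow> ((nat \<Rightarrow> 'a) \<Rightarrow> real) \<Rightarrow> real" where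
  "mutual_info2 n \<mu> \<rho>1 \<rho>2 =
     integ n \<mu> \<rho>1 * KL n (cond_meas n \<mu> \<rho>1) \<mu> + integ n \<mu> \<rho>2 * KL n (cond_meas n \<mu> \<rho>2) \<mu>"

end

theory Submission
  imports Defs
begin


lemma fm_base:
  fixes S :: "(('j \<Rightarrow> real) \<times> real) set"
  assumes "finite S" "\<not>(\<exists>x. \<forall>s\<in>S. (\<Sum>k\<in>{}. fst s k * x k) \<le> snd s)"
  shows "\<exists>l. (\<forall>s\<in>S. 0 \<le> l s) \<and> (\<forall>k\<in>{}. (\<Sum>s\<in>S. l s * fst s k) = 0) \<and> (\<Sum>s\<in>S. l s * snd s) < 0"
proof -
  from assms(2) obtain s0 where s0: "s0 \<in> S" "snd s0 < 0" by force
  let ?l = "\<lambda>s. if s = s0 then 1 else (0::real)"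
  have "(\<Sum>s\<in>S. ?l s * snd s) = (\<Sum>s\<in>S. if s = s0 then snd s else 0)"
    by (intro sum.cong) auto
  also have "\<dots> = snd s0" using s0 assms(1) by (simp add: sum.delta)
  finally have "(\<Sum>s\<in>S. ?l s * snd s) = snd s0" .
  then show ?thesis using s0 by (intro exI[of _ ?l]) auto
qed

lemma fm_extend:
  fixes S :: "(('j \<Rightarrow> real) \<times> real) set" and j :: 'j
  assumes fin: "finite S" and jJ: "j \<notin> J" and finJ: "finite J"
    and feas: "\<forall>s\<in>{s\<in>S. fst s j = 0} \<union> (\<lambda>(p,q). (\<lambda>k. (- fst q j) * fst p k + fst p j * fst q k,
            (- fst q j) * snd p + fst p j * snd q)) ` ({s\<in>S. fst s j > 0} \<times> {s\<in>S. fst s j < 0}).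
          (\<Sum>k\<in>J. fst s k * x k) \<le> snd s"
  shows "\<exists>x. \<forall>s\<in>S. (\<Sum>k\<in>insert j J. fst s k * x k) \<le> snd s"
proof -
  define Sp where "Sp = {s\<in>S. fst s j > 0}"
  define Sn where "Sn = {s\<in>S. fst s j < 0}"
  define val where "val s = (\<Sum>k\<in>J. fst s k * x k)" for s :: "('j \<Rightarrow> real) \<times> real"
  define U where "U p = (snd p - val p) / fst p j" for p :: "('j \<Rightarrow> real) \<times> real"
  define L where "L q = (snd q - val q) / fst q j" for q :: "('j \<Rightarrow> real) \<times> real"
  have LU: "L q \<le> U p" if p: "p \<in> Sp" and q: "q \<in> Sn" for p q
  proof -
    have "(\<lambda>k. (- fst q j) * fst p k + fst p j * fst q k, (- fst q j) * snd p + fst p j * snd q)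
       \<in> (\<lambda>(p,q). (\<lambda>k. (- fst q j) * fst p k + fst p j * fst q k,
            (- fst q j) * snd p + fst p j * snd q)) ` ({s\<in>S. fst s j > 0} \<times> {s\<in>S. fst s j < 0})"
      using p q unfolding Sp_def Sn_def by force
    from feas[rule_format, OF UnI2[OF this]]
    have "(\<Sum>k\<in>J. ((- fst q j) * fst p k + fst p j * fst q k) * x k) \<le> (- fst q j) * snd p + fst p j * snd q"
      by simp
    also have "(\<Sum>k\<in>J. ((- fst q j) * fst p k + fst p j * fst q k) * x k) = (- fst q j) * val p + fst p j * val q"
      proof -
      have "(\<Sum>k\<in>J. ((- fst q j) * fst p k + fst p j * fst q k) * x k) =
        (\<Sum>k\<in>J. (- fst q j) * (fst p k * x k) + fst p j * (fst q k * x k))"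
        by (intro sum.cong) (auto simp: algebra_simps)
      also have "\<dots> = (- fst q j) * (\<Sum>k\<in>J. fst p k * x k) + fst p j * (\<Sum>k\<in>J. fst q k * x k)"
        by (simp only: sum.distrib sum_distrib_left)
      finally show ?thesis unfolding val_def .
    qed
    finally have *: "(- fst q j) * val p + fst p j * val q \<le> (- fst q j) * snd p + fst p j * snd q" .
    have ap: "fst p j > 0" and aq: "fst q j < 0" using p q by (auto simp: Sp_def Sn_def)
    have "(val q - snd q) * fst p j \<le> (snd p - val p) * (- fst q j)" using * by (simp add: algebra_simps)
    hence "(val q - snd q) * fst p j / (fst p j * (- fst q j)) \<le> (snd p - val p) * (- fst q j) / (fst p j * (- fst q j))"
      using ap aq mult_pos_neg[OF ap aq] by (intro divide_right_mono) auto
    moreover have "(val q - snd q) * fst p j / (fst p j * (- fst q j)) = L q"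
      using ap aq unfolding L_def by (simp add: divide_simps)
    moreover have "(snd p - val p) * (- fst q j) / (fst p j * (- fst q j)) = U p"
      using ap aq unfolding U_def by (simp add: divide_simps)
    ultimately show ?thesis by simp
  qed
  define y where "y = (if Sn = {} then (if Sp = {} then 0 else Min (U ` Sp)) else Max (L ` Sn))"
  have finSp: "finite Sp" and finSn: "finite Sn" using fin by (auto simp: Sp_def Sn_def)
  have yU: "y \<le> U p" if "p \<in> Sp" for p
  proof (cases "Sn = {}")
    case True thus ?thesis using that finSp by (auto simp: y_def)
  next
    case False
    then obtain q where q: "q \<in> Sn" "Max (L ` Sn) = L q"
      using finSn by (metis (no_types, lifting) Max_in empty_is_image finite_imageI imageE)
    thus ?thesis using LU[OF that q(1)] False by (simp add: y_def)
  qed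
  have yL: "L q \<le> y" if "q \<in> Sn" for q
    using that finSn by (auto simp: y_def)
  define x' where "x' = x(j := y)"
  have sumx': "(\<Sum>k\<in>insert j J. fst s k * x' k) = fst s j * y + val s" for s
  proof -
    have "(\<Sum>k\<in>J. fst s k * x' k) = val s" unfolding val_def x'_def using jJ
      by (intro sum.cong) auto
    thus ?thesis using jJ finJ by (simp add: x'_def)
  qed
  show ?thesis
  proof (intro exI[of _ x'] ballI)
    fix s assume s: "s \<in> S"
    consider "fst s j = 0" | "fst s j > 0" | "fst s j < 0" by linarith
    thus "(\<Sum>k\<in>insert j J. fst s k * x' k) \<le> snd s"
    proof cases
      case 1 thus ?thesis using feas s unfolding sumx' val_def by auto
    next
      case 2
      hence "y \<le> U s" using yU s by (auto simp: Sp_def)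
      hence "fst s j * y \<le> fst s j * U s" using 2 by (intro mult_left_mono) auto
      moreover have "fst s j * U s = snd s - val s" using 2 by (simp add: U_def)
      ultimately show ?thesis unfolding sumx' by simp
    next
      case 3
      hence "L s \<le> y" using yL s by (auto simp: Sn_def)
      hence "fst s j * y \<le> fst s j * L s" using 3 by (intro mult_left_mono_neg) auto
      moreover have "fst s j * L s = snd s - val s" using 3 by (simp add: L_def)
      ultimately show ?thesis unfolding sumx' by simp
    qed
  qed
qed

lemma fm:
  fixes J :: "'j set" and S :: "(('j \<Rightarrow> real) \<times> real) set"
  assumes "finite J" "finite S" "\<not>(\<exists>x. \<forall>s\<in>S. (\<Sum>k\<in>J. fst s k * x k) \<le> snd s)"
  shows "\<exists>l. (\<forall>s\<in>S. 0 \<le> l s) \<and> (\<forall>k\<in>J. (\<Sum>s\<in>S. l s * fst s k) = 0) \<and> (\<Sum>s\<in>S. l s * snd s) < 0"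
  using assms
proof (induction J arbitrary: S rule: finite_induct)
  case empty
  then show ?case using fm_base by blast
next
  case (insert j J)
  define Sp where "Sp = {s\<in>S. fst s j > 0}"
  define Sn where "Sn = {s\<in>S. fst s j < 0}"
  define S0 where "S0 = {s\<in>S. fst s j = 0}"
  define comb where "comb = ((\<lambda>(p,q). (\<lambda>k. (- fst q j) * fst p k + fst p j * fst q k,
            (- fst q j) * snd p + fst p j * snd q)) :: (('j \<Rightarrow> real) \<times> real) \<times> (('j \<Rightarrow> real) \<times> real) \<Rightarrow> _)"
  define S' where "S' = S0 \<union> comb ` (Sp \<times> Sn)"
  have finS': "finite S'" using insert.prems(1) by (auto simp: S'_def S0_def Sp_def Sn_def)
  have inf': "\<not>(\<exists>x. \<forall>s\<in>S'. (\<Sum>k\<in>J. fst s k * x k) \<le> snd s)"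
  proof
    assume "\<exists>x. \<forall>s\<in>S'. (\<Sum>k\<in>J. fst s k * x k) \<le> snd s"
    then obtain x where "\<forall>s\<in>S'. (\<Sum>k\<in>J. fst s k * x k) \<le> snd s" by blast
    from fm_extend[OF insert.prems(1) insert.hyps(2) insert.hyps(1), of x] this
    have "\<exists>x. \<forall>s\<in>S. (\<Sum>k\<in>insert j J. fst s k * x k) \<le> snd s"
      unfolding S'_def S0_def comb_def Sp_def Sn_def by blast
    thus False using insert.prems(2) by blast
  qed
  from insert.IH[OF finS' inf'] obtain l' where l':
    "\<forall>s\<in>S'. 0 \<le> l' s" "\<forall>k\<in>J. (\<Sum>s\<in>S'. l' s * fst s k) = 0" "(\<Sum>s\<in>S'. l' s * snd s) < 0"
    by blast
  define good where "good s' c \<longleftrightarrow> (\<forall>s. 0 \<le> c s) \<and> (\<forall>k\<in>J. (\<Sum>s\<in>S. c s * fst s k) = fst s' k)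
      \<and> (\<Sum>s\<in>S. c s * snd s) = snd s' \<and> (\<Sum>s\<in>S. c s * fst s j) = 0"
    for s' :: "('j \<Rightarrow> real) \<times> real" and c :: "('j \<Rightarrow> real) \<times> real \<Rightarrow> real"
  have ex: "\<exists>c. good s' c" if s'S': "s' \<in> S'" for s'
  proof -
    consider "s' \<in> S0" | p q where "p \<in> Sp" "q \<in> Sn" "s' = comb (p,q)" using s'S' unfolding S'_def by blast
    thus ?thesis
    proof cases
      case 1
      let ?c = "\<lambda>s. if s = s' then 1 else (0::real)"
      have s'S: "s' \<in> S" "fst s' j = 0" using 1 by (auto simp: S0_def)
      have "\<And>f. (\<Sum>s\<in>S. ?c s * f s) = f s'"
      proof -
        fix f :: "('j \<Rightarrow> real) \<times> real \<Rightarrow> real"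
        have "(\<Sum>s\<in>S. ?c s * f s) = (\<Sum>s\<in>S. if s = s' then f s else 0)" by (intro sum.cong) auto
        also have "\<dots> = f s'" using s'S insert.prems(1) by simp
        finally show "(\<Sum>s\<in>S. ?c s * f s) = f s'" .
      qed
      hence "good s' ?c" unfolding good_def using s'S by auto
      thus ?thesis by blast
    next
      case 2
      have pq: "p \<in> S" "q \<in> S" "fst p j > 0" "fst q j < 0" using 2 by (auto simp: Sp_def Sn_def)
      hence pnq: "p \<noteq> q" by auto
      let ?c = "\<lambda>s. (if s = p then - fst q j else 0) + (if s = q then fst p j else (0::real))"
      have csum: "\<And>f. (\<Sum>s\<in>S. ?c s * f s) = (- fst q j) * f p + fst p j * f q"
      proof -
        fix f :: "('j \<Rightarrow> real) \<times> real \<Rightarrow> real"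
        have "(\<Sum>s\<in>S. ?c s * f s) = (\<Sum>s\<in>S. (if s = p then - fst q j * f s else 0) + (if s = q then fst p j * f s else 0))"
          by (intro sum.cong) (auto simp: algebra_simps)
        also have "\<dots> = (- fst q j) * f p + fst p j * f q" using pq insert.prems(1) by (simp add: sum.distrib)
        finally show "(\<Sum>s\<in>S. ?c s * f s) = (- fst q j) * f p + fst p j * f q" .
      qed
      have "good s' ?c" unfolding good_def
      proof (intro conjI ballI allI)
        show "0 \<le> ?c s" for s using pq by auto
        show "(\<Sum>s\<in>S. ?c s * fst s k) = fst s' k" for k
          unfolding csum using 2 by (simp add: comb_def)
        show "(\<Sum>s\<in>S. ?c s * snd s) = snd s'"
          unfolding csum using 2 by (simp add: comb_def)
        show "(\<Sum>s\<in>S. ?c s * fst s j) = 0"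
          unfolding csum by simp
      qed
      thus ?thesis by blast
    qed
  qed
  define C where "C s' = (SOME c. good s' c)" for s'
  have C: "good s' (C s')" if "s' \<in> S'" for s' using ex[OF that] unfolding C_def by (rule someI_ex)
  define l where "l s = (\<Sum>s'\<in>S'. l' s' * C s' s)" for s
  have swap: "(\<Sum>s\<in>S. l s * f s) = (\<Sum>s'\<in>S'. l' s' * (\<Sum>s\<in>S. C s' s * f s))" for f
  proof -
    have "(\<Sum>s\<in>S. l s * f s) = (\<Sum>s\<in>S. \<Sum>s'\<in>S'. l' s' * (C s' s * f s))"
      unfolding l_def by (simp add: sum_distrib_right mult.assoc)
    also have "\<dots> = (\<Sum>s'\<in>S'. \<Sum>s\<in>S. l' s' * (C s' s * f s))" by (rule sum.swap)
    also have "\<dots> = (\<Sum>s'\<in>S'. l' s' * (\<Sum>s\<in>S. C s' s * f s))" by (simp add: sum_distrib_left)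
    finally show ?thesis .
  qed
  show ?case
  proof (intro exI[of _ l] conjI ballI)
    fix s assume "s \<in> S"
    show "0 \<le> l s" unfolding l_def
    proof (intro sum_nonneg mult_nonneg_nonneg)
      fix s' assume "s' \<in> S'"
      thus "0 \<le> l' s'" "0 \<le> C s' s" using l'(1) C[of s'] unfolding good_def
        by (auto simp del: split_paired_All)
    qed
  next
    fix k assume k: "k \<in> insert j J"
    show "(\<Sum>s\<in>S. l s * fst s k) = 0"
    proof (cases "k = j")
      case True
      have "(\<Sum>s\<in>S. l s * fst s k) = (\<Sum>s'\<in>S'. l' s' * 0)" unfolding swap True
        using C unfolding good_def by (intro sum.cong) auto
      thus ?thesis by simp
    next
      case False
      hence kJ: "k \<in> J" using k by auto
      have "(\<Sum>s\<in>S. l s * fst s k) = (\<Sum>s'\<in>S'. l' s' * fst s' k)" unfolding swap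
        using C kJ unfolding good_def by (intro sum.cong) auto
      thus ?thesis using l'(2) kJ by simp
    qed
  next
    have "(\<Sum>s\<in>S. l s * snd s) = (\<Sum>s'\<in>S'. l' s' * snd s')" unfolding swap
      using C unfolding good_def by (intro sum.cong) auto
    thus "(\<Sum>s\<in>S. l s * snd s) < 0" using l'(3) by simp
  qed
qed


lemma fm_indexed:
  fixes J :: "'j set" and K :: "'k set" and A :: "'k \<Rightarrow> 'j \<Rightarrow> real" and b :: "'k \<Rightarrow> real"
  assumes "finite J" "finite K" "\<not>(\<exists>x. \<forall>k\<in>K. (\<Sum>j\<in>J. A k j * x j) \<le> b k)"
  shows "\<exists>l. (\<forall>k\<in>K. 0 \<le> l k) \<and> (\<forall>j\<in>J. (\<Sum>k\<in>K. l k * A k j) = 0) \<and> (\<Sum>k\<in>K. l k * b k) < 0"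
proof -
  define S where "S = (\<lambda>k. (A k, b k)) ` K"
  have "finite S" using assms(2) by (simp add: S_def)
  moreover have "\<not>(\<exists>x. \<forall>s\<in>S. (\<Sum>j\<in>J. fst s j * x j) \<le> snd s)"
  proof
    assume "\<exists>x. \<forall>s\<in>S. (\<Sum>j\<in>J. fst s j * x j) \<le> snd s"
    then obtain x where "\<forall>s\<in>S. (\<Sum>j\<in>J. fst s j * x j) \<le> snd s" by blast
    hence "\<forall>k\<in>K. (\<Sum>j\<in>J. A k j * x j) \<le> b k" by (simp add: S_def)
    thus False using assms(3) by blast
  qed
  ultimately have "\<exists>l. (\<forall>s\<in>S. 0 \<le> l s) \<and> (\<forall>j\<in>J. (\<Sum>s\<in>S. l s * fst s j) = 0) \<and> (\<Sum>s\<in>S. l s * snd s) < 0"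
    by (rule fm[OF assms(1)])
  then obtain l where l: "\<forall>s\<in>S. 0 \<le> l s" "\<forall>j\<in>J. (\<Sum>s\<in>S. l s * fst s j) = 0" "(\<Sum>s\<in>S. l s * snd s) < 0"
    by blast
  define rep where "rep s = (SOME k. k \<in> K \<and> (A k, b k) = s)" for s
  have rep: "rep s \<in> K \<and> (A (rep s), b (rep s)) = s" if "s \<in> S" for s
  proof -
    from that obtain k where k: "k \<in> K" "(A k, b k) = s" by (auto simp: S_def)
    show ?thesis unfolding rep_def by (rule someI[of "\<lambda>k. k \<in> K \<and> (A k, b k) = s" k]) (use k in auto)
  qed
  define lk where "lk k = (if k = rep (A k, b k) then l (A k, b k) else 0)" for k
  have key: "(\<Sum>k\<in>K. lk k * F (A k, b k)) = (\<Sum>s\<in>S. l s * F s)" for F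
  proof -
    have sub: "rep ` S \<subseteq> K"
    proof
      fix k assume "k \<in> rep ` S"
      then obtain s where s: "s \<in> S" "k = rep s" by (rule imageE)
      show "k \<in> K" using rep[OF s(1)] s(2) by simp
    qed
    have "(\<Sum>k\<in>K. lk k * F (A k, b k)) = (\<Sum>k\<in>rep ` S. lk k * F (A k, b k))"
    proof (rule sum.mono_neutral_right[OF assms(2) sub], rule ballI)
      fix k assume k: "k \<in> K - rep ` S"
      have "(A k, b k) \<in> S" using k by (auto simp: S_def)
      hence "rep (A k, b k) \<in> rep ` S" by (rule imageI)
      moreover have "k \<notin> rep ` S" using k by simp
      ultimately have "k \<noteq> rep (A k, b k)" by metis
      thus "lk k * F (A k, b k) = 0" by (simp add: lk_def)
    qed
    also have "\<dots> = (\<Sum>s\<in>S. lk (rep s) * F (A (rep s), b (rep s)))"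
    proof -
      have inj: "inj_on rep S"
      proof (rule inj_onI)
        fix s t
        assume st: "s \<in> S" "t \<in> S" "rep s = rep t"
        have "s = (A (rep s), b (rep s))" using rep[OF st(1)] by simp
        also have "\<dots> = (A (rep t), b (rep t))" using st(3) by simp
        also have "\<dots> = t" using rep[OF st(2)] by simp
        finally show "s = t" .
      qed
      show ?thesis using sum.reindex[OF inj, of "\<lambda>k. lk k * F (A k, b k)"] unfolding comp_def .
    qed
    also have "\<dots> = (\<Sum>s\<in>S. l s * F s)"
    proof (intro sum.cong refl)
      fix s assume s: "s \<in> S"
      have e: "(A (rep s), b (rep s)) = s" using rep[OF s] by blast
      show "lk (rep s) * F (A (rep s), b (rep s)) = l s * F s"
        unfolding lk_def e by simp
    qed
    finally show ?thesis .
  qed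
  show ?thesis
  proof (intro exI[of _ lk] conjI ballI)
    fix k assume "k \<in> K"
    hence "(A k, b k) \<in> S" by (simp add: S_def)
    thus "0 \<le> lk k" using l(1) unfolding lk_def by simp
  next
    fix j assume "j \<in> J"
    thus "(\<Sum>k\<in>K. lk k * A k j) = 0" using key[of "\<lambda>s. fst s j"] l(2) by simp
  next
    show "(\<Sum>k\<in>K. lk k * b k) < 0" using key[of snd] l(3) by simp
  qed
qed


lemma finite_words: "finite (words n :: (nat \<Rightarrow> 'a::finite) set)"
  unfolding words_def by (intro finite_PiE) auto

lemma words_ne: "words n \<noteq> {}"
  unfolding words_def by (simp add: PiE_eq_empty_iff)

lemma hamming_nonneg: "0 \<le> hamming n x y"
  unfolding hamming_def by simp

lemma hamming_self: "hamming n x x = 0"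
  unfolding hamming_def by simp

lemma hamming_sym: "hamming n x y = hamming n y x"
  unfolding hamming_def by (simp add: eq_commute)

lemma hamming_le1: "hamming n x y \<le> 1"
proof -
  have "card {i. i < n \<and> x i \<noteq> y i} \<le> card {..<n}" by (intro card_mono) auto
  hence "real (card {i. i < n \<and> x i \<noteq> y i}) \<le> real n" by simp
  thus ?thesis unfolding hamming_def by (cases "n = 0") (auto simp: divide_le_eq)
qed

lemma hamming_tri: "hamming n x z \<le> hamming n x y + hamming n y z"
proof -
  have "{i. i < n \<and> x i \<noteq> z i} \<subseteq> {i. i < n \<and> x i \<noteq> y i} \<union> {i. i < n \<and> y i \<noteq> z i}" by auto
  hence "card {i. i < n \<and> x i \<noteq> z i} \<le> card ({i. i < n \<and> x i \<noteq> y i} \<union> {i. i < n \<and> y i \<noteq> z i})"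
    by (intro card_mono) auto
  also have "\<dots> \<le> card {i. i < n \<and> x i \<noteq> y i} + card {i. i < n \<and> y i \<noteq> z i}" by (rule card_Un_le)
  finally have "real (card {i. i < n \<and> x i \<noteq> z i}) \<le> real (card {i. i < n \<and> x i \<noteq> y i}) + real (card {i. i < n \<and> y i \<noteq> z i})"
    by linarith
  thus ?thesis unfolding hamming_def by (simp add: add_divide_distrib[symmetric] divide_right_mono)
qed

datatype 'w cix = Pos "'w \<times> 'w" | RP 'w | RN 'w | CP 'w | CN 'w | Cost

definition KK :: "'w set \<Rightarrow> 'w cix set" where
  "KK W = Pos ` (W \<times> W) \<union> (RP ` W \<union> (RN ` W \<union> (CP ` W \<union> (CN ` W \<union> {Cost}))))"

lemma sum_KK:
  assumes "finite W"
  shows "(\<Sum>k\<in>KK W. f k) = (\<Sum>z\<in>W \<times> W. f (Pos z)) + (\<Sum>x\<in>W. f (RP x)) + (\<Sum>x\<in>W. f (RN x))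
     + (\<Sum>x\<in>W. f (CP x)) + (\<Sum>x\<in>W. f (CN x)) + f Cost"
proof -
  have fin: "finite (W \<times> W)" using assms by simp
  have i1: "(\<Sum>k\<in>Pos ` (W \<times> W). f k) = (\<Sum>z\<in>W \<times> W. f (Pos z))" by (subst sum.reindex) (auto simp: inj_on_def)
  have i2: "(\<Sum>k\<in>RP ` W. f k) = (\<Sum>z\<in>W. f (RP z))" by (subst sum.reindex) (auto simp: inj_on_def)
  have i3: "(\<Sum>k\<in>RN ` W. f k) = (\<Sum>z\<in>W. f (RN z))" by (subst sum.reindex) (auto simp: inj_on_def)
  have i4: "(\<Sum>k\<in>CP ` W. f k) = (\<Sum>z\<in>W. f (CP z))" by (subst sum.reindex) (auto simp: inj_on_def)
  have i5: "(\<Sum>k\<in>CN ` W. f k) = (\<Sum>z\<in>W. f (CN z))" by (subst sum.reindex) (auto simp: inj_on_def)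
  have e5: "(\<Sum>k\<in>CN ` W \<union> {Cost}. f k) = (\<Sum>z\<in>W. f (CN z)) + f Cost"
    using assms by (subst sum.union_disjoint) (auto simp: i5)
  have e4: "(\<Sum>k\<in>CP ` W \<union> (CN ` W \<union> {Cost}). f k) = (\<Sum>z\<in>W. f (CP z)) + ((\<Sum>z\<in>W. f (CN z)) + f Cost)"
    using assms sum.union_disjoint[of "CP ` W" "CN ` W \<union> {Cost}" f] i4 e5 by auto
  have e3: "(\<Sum>k\<in>RN ` W \<union> (CP ` W \<union> (CN ` W \<union> {Cost})). f k) = (\<Sum>z\<in>W. f (RN z)) + ((\<Sum>z\<in>W. f (CP z)) + ((\<Sum>z\<in>W. f (CN z)) + f Cost))"
    using assms sum.union_disjoint[of "RN ` W" "CP ` W \<union> (CN ` W \<union> {Cost})" f] i3 e4 by auto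
  have e2: "(\<Sum>k\<in>RP ` W \<union> (RN ` W \<union> (CP ` W \<union> (CN ` W \<union> {Cost}))). f k) = (\<Sum>z\<in>W. f (RP z)) + ((\<Sum>z\<in>W. f (RN z)) + ((\<Sum>z\<in>W. f (CP z)) + ((\<Sum>z\<in>W. f (CN z)) + f Cost)))"
    using assms sum.union_disjoint[of "RP ` W" "RN ` W \<union> (CP ` W \<union> (CN ` W \<union> {Cost}))" f] i2 e3 by auto
  have e1: "(\<Sum>k\<in>KK W. f k) = (\<Sum>z\<in>W \<times> W. f (Pos z)) + ((\<Sum>z\<in>W. f (RP z)) + ((\<Sum>z\<in>W. f (RN z)) + ((\<Sum>z\<in>W. f (CP z)) + ((\<Sum>z\<in>W. f (CN z)) + f Cost))))"
    unfolding KK_def using assms fin sum.union_disjoint[of "Pos ` (W \<times> W)" "RP ` W \<union> (RN ` W \<union> (CP ` W \<union> (CN ` W \<union> {Cost})))" f] i1 e2 by auto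
  show ?thesis unfolding e1 by (simp add: algebra_simps)
qed

lemma finite_KK: "finite W \<Longrightarrow> finite (KK W)" unfolding KK_def by simp

fun cA :: "nat \<Rightarrow> (nat \<Rightarrow> 'a) cix \<Rightarrow> (nat \<Rightarrow> 'a) \<times> (nat \<Rightarrow> 'a) \<Rightarrow> real" where
  "cA n (Pos z') z = (if z = z' then -1 else 0)"
| "cA n (RP x) z = (if fst z = x then 1 else 0)"
| "cA n (RN x) z = (if fst z = x then -1 else 0)"
| "cA n (CP y) z = (if snd z = y then 1 else 0)"
| "cA n (CN y) z = (if snd z = y then -1 else 0)"
| "cA n Cost z = hamming n (fst z) (snd z)"

fun cb :: "((nat \<Rightarrow> 'a) \<Rightarrow> real) \<Rightarrow> ((nat \<Rightarrow> 'a) \<Rightarrow> real) \<Rightarrow> real \<Rightarrow> (nat \<Rightarrow> 'a) cix \<Rightarrow> real" where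
  "cb \<nu> \<mu> c (Pos z) = 0"
| "cb \<nu> \<mu> c (RP x) = \<nu> x"
| "cb \<nu> \<mu> c (RN x) = - \<nu> x"
| "cb \<nu> \<mu> c (CP y) = \<mu> y"
| "cb \<nu> \<mu> c (CN y) = - \<mu> y"
| "cb \<nu> \<mu> c Cost = c"

lemma sum_fst_delta:
  assumes "finite W" "x0 \<in> W"
  shows "(\<Sum>z\<in>W \<times> W. (if fst z = x0 then g z else 0)) = (\<Sum>y\<in>W. g (x0, y))"
proof -
  have "(\<Sum>z\<in>W \<times> W. (if fst z = x0 then g z else 0)) = (\<Sum>x\<in>W. \<Sum>y\<in>W. (if x = x0 then g (x, y) else 0))"
    by (simp add: sum.cartesian_product')
  also have "\<dots> = (\<Sum>x\<in>W. if x = x0 then (\<Sum>y\<in>W. g (x, y)) else 0)"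
    by (intro sum.cong) auto
  also have "\<dots> = (\<Sum>y\<in>W. g (x0, y))" using assms by simp
  finally show ?thesis .
qed

lemma sum_snd_delta:
  assumes "finite W" "y0 \<in> W"
  shows "(\<Sum>z\<in>W \<times> W. (if snd z = y0 then g z else 0)) = (\<Sum>x\<in>W. g (x, y0))"
proof -
  have "(\<Sum>z\<in>W \<times> W. (if snd z = y0 then g z else 0)) = (\<Sum>x\<in>W. \<Sum>y\<in>W. (if y = y0 then g (x, y) else 0))"
    by (simp add: sum.cartesian_product')
  also have "\<dots> = (\<Sum>x\<in>W. g (x, y0))"
    using assms by (intro sum.cong) auto
  finally show ?thesis .
qed

lemma sum_pos_delta:
  assumes "finite W" "z0 \<in> W \<times> W"
  shows "(\<Sum>z\<in>W \<times> W. (if z = z0 then g z else 0)) = g z0"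
  using assms by simp

lemma sum_mult_delta:
  assumes "finite W" "a \<in> W"
  shows "(\<Sum>x\<in>W. g x * (if a = x then c else 0)) = g a * (c::real)"
proof -
  have "(\<Sum>x\<in>W. g x * (if a = x then c else 0)) = (\<Sum>x\<in>W. if a = x then g x * c else 0)"
    by (intro sum.cong) auto
  also have "\<dots> = g a * c" using assms by simp
  finally show ?thesis .
qed

lemma transport_dual:
  fixes \<nu> \<mu> :: "(nat \<Rightarrow> 'a::finite) \<Rightarrow> real"
  assumes nu: "is_prob n \<nu>" and mu: "is_prob n \<mu>" and gt: "c < transport_dist n \<nu> \<mu>"
  shows "\<exists>h. (\<forall>x\<in>words n. \<forall>y\<in>words n. h x - h y \<le> hamming n x y)
     \<and> c < (\<Sum>x\<in>words n. h x * \<nu> x) - (\<Sum>x\<in>words n. h x * \<mu> x)"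
proof -
  define W where "W = (words n :: (nat \<Rightarrow> 'a) set)"
  have finW: "finite W" unfolding W_def by (rule finite_words)
  have neW: "W \<noteq> {}" unfolding W_def by (rule words_ne)
  have finWW: "finite (W \<times> W)" using finW by simp
  have infeas: "\<not>(\<exists>x. \<forall>k\<in>KK W. (\<Sum>z\<in>W \<times> W. cA n k z * x z) \<le> cb \<nu> \<mu> c k)"
  proof
    assume "\<exists>x. \<forall>k\<in>KK W. (\<Sum>z\<in>W \<times> W. cA n k z * x z) \<le> cb \<nu> \<mu> c k"
    then obtain x where x: "\<forall>k\<in>KK W. (\<Sum>z\<in>W \<times> W. cA n k z * x z) \<le> cb \<nu> \<mu> c k" by blast
    have xpos: "0 \<le> x z" if "z \<in> W \<times> W" for z
    proof -
      have "Pos z \<in> KK W" using that by (simp add: KK_def)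
      with x have "(\<Sum>z'\<in>W \<times> W. cA n (Pos z) z' * x z') \<le> 0" by force
      also have "(\<Sum>z'\<in>W \<times> W. cA n (Pos z) z' * x z') = (\<Sum>z'\<in>W \<times> W. if z' = z then - x z' else 0)"
        by (intro sum.cong) auto
      also have "\<dots> = - x z" using sum_pos_delta[OF finW that, of "\<lambda>z. - x z"] by simp
      finally show ?thesis by simp
    qed
    have rows: "(\<Sum>y\<in>W. x (x0, y)) = \<nu> x0" if "x0 \<in> W" for x0
    proof -
      have "RP x0 \<in> KK W" "RN x0 \<in> KK W" using that by (auto simp: KK_def)
      with x have a: "(\<Sum>z\<in>W \<times> W. cA n (RP x0) z * x z) \<le> \<nu> x0"
        and b: "(\<Sum>z\<in>W \<times> W. cA n (RN x0) z * x z) \<le> - \<nu> x0" by force+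
      have "(\<Sum>z\<in>W \<times> W. cA n (RP x0) z * x z) = (\<Sum>z\<in>W \<times> W. if fst z = x0 then x z else 0)"
        by (intro sum.cong) auto
      also have "\<dots> = (\<Sum>y\<in>W. x (x0, y))" by (rule sum_fst_delta[OF finW that])
      finally have a': "(\<Sum>z\<in>W \<times> W. cA n (RP x0) z * x z) = (\<Sum>y\<in>W. x (x0, y))" .
      have "(\<Sum>z\<in>W \<times> W. cA n (RN x0) z * x z) = (\<Sum>z\<in>W \<times> W. if fst z = x0 then - x z else 0)"
        by (intro sum.cong) auto
      also have "\<dots> = - (\<Sum>y\<in>W. x (x0, y))" using sum_fst_delta[OF finW that, of "\<lambda>z. - x z"]
        by (simp add: sum_negf)
      finally have b': "(\<Sum>z\<in>W \<times> W. cA n (RN x0) z * x z) = - (\<Sum>y\<in>W. x (x0, y))" .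
      show ?thesis using a b a' b' by linarith
    qed
    have cols: "(\<Sum>x'\<in>W. x (x', y0)) = \<mu> y0" if "y0 \<in> W" for y0
    proof -
      have "CP y0 \<in> KK W" "CN y0 \<in> KK W" using that by (auto simp: KK_def)
      with x have a: "(\<Sum>z\<in>W \<times> W. cA n (CP y0) z * x z) \<le> \<mu> y0"
        and b: "(\<Sum>z\<in>W \<times> W. cA n (CN y0) z * x z) \<le> - \<mu> y0" by force+
      have "(\<Sum>z\<in>W \<times> W. cA n (CP y0) z * x z) = (\<Sum>z\<in>W \<times> W. if snd z = y0 then x z else 0)"
        by (intro sum.cong) auto
      also have "\<dots> = (\<Sum>x'\<in>W. x (x', y0))" by (rule sum_snd_delta[OF finW that])
      finally have a': "(\<Sum>z\<in>W \<times> W. cA n (CP y0) z * x z) = (\<Sum>x'\<in>W. x (x', y0))" .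
      have "(\<Sum>z\<in>W \<times> W. cA n (CN y0) z * x z) = (\<Sum>z\<in>W \<times> W. if snd z = y0 then - x z else 0)"
        by (intro sum.cong) auto
      also have "\<dots> = - (\<Sum>x'\<in>W. x (x', y0))" using sum_snd_delta[OF finW that, of "\<lambda>z. - x z"]
        by (simp add: sum_negf)
      finally have b': "(\<Sum>z\<in>W \<times> W. cA n (CN y0) z * x z) = - (\<Sum>x'\<in>W. x (x', y0))" .
      show ?thesis using a b a' b' by linarith
    qed
    have cost: "(\<Sum>z\<in>W \<times> W. hamming n (fst z) (snd z) * x z) \<le> c"
    proof -
      have "Cost \<in> KK W" by (simp add: KK_def)
      with x show ?thesis by force
    qed
    define pp where "pp z = (if z \<in> W \<times> W then x z else 0)" for z
    have cpl: "coupling n pp \<nu> \<mu>"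
      unfolding coupling_def
    proof (intro conjI allI impI ballI)
      fix z show "0 \<le> pp z" using xpos by (auto simp: pp_def)
    next
      fix z :: "(nat \<Rightarrow> 'a) \<times> (nat \<Rightarrow> 'a)" assume "z \<notin> words n \<times> words n" thus "pp z = 0" by (simp add: pp_def W_def)
    next
      fix x0 :: "nat \<Rightarrow> 'a" assume "x0 \<in> words n"
      hence x0: "x0 \<in> W" by (simp add: W_def)
      have "(\<Sum>y\<in>words n. pp (x0, y)) = (\<Sum>y\<in>W. x (x0, y))"
        unfolding W_def[symmetric] using x0 by (intro sum.cong) (auto simp: pp_def)
      thus "(\<Sum>y\<in>words n. pp (x0, y)) = \<nu> x0" using rows[OF x0] by simp
    next
      fix y0 :: "nat \<Rightarrow> 'a" assume "y0 \<in> words n"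
      hence y0: "y0 \<in> W" by (simp add: W_def)
      have "(\<Sum>x'\<in>words n. pp (x', y0)) = (\<Sum>x'\<in>W. x (x', y0))"
        unfolding W_def[symmetric] using y0 by (intro sum.cong) (auto simp: pp_def)
      thus "(\<Sum>x'\<in>words n. pp (x', y0)) = \<mu> y0" using cols[OF y0] by simp
    qed
    have costeq: "(\<Sum>z\<in>words n \<times> words n. pp z * hamming n (fst z) (snd z)) = (\<Sum>z\<in>W \<times> W. hamming n (fst z) (snd z) * x z)"
      unfolding W_def[symmetric] by (intro sum.cong) (auto simp: pp_def)
    have "transport_dist n \<nu> \<mu> \<le> (\<Sum>z\<in>words n \<times> words n. pp z * hamming n (fst z) (snd z))"
      unfolding transport_dist_def
    proof (rule cInf_lower)
      show "(\<Sum>z\<in>words n \<times> words n. pp z * hamming n (fst z) (snd z))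
         \<in> {\<Sum>z\<in>words n \<times> words n. \<pi> z * hamming n (fst z) (snd z) |\<pi>. coupling n \<pi> \<nu> \<mu>}"
        using cpl by blast
      show "bdd_below {\<Sum>z\<in>words n \<times> words n. \<pi> z * hamming n (fst z) (snd z) |\<pi>. coupling n \<pi> \<nu> \<mu>}"
      proof (rule bdd_belowI[of _ 0])
        fix t assume "t \<in> {\<Sum>z\<in>words n \<times> words n. \<pi> z * hamming n (fst z) (snd z) |\<pi>. coupling n \<pi> \<nu> \<mu>}"
        then obtain \<pi>' where "coupling n \<pi>' \<nu> \<mu>" "t = (\<Sum>z\<in>words n \<times> words n. \<pi>' z * hamming n (fst z) (snd z))" by blast
        thus "0 \<le> t" unfolding coupling_def by (auto intro!: sum_nonneg mult_nonneg_nonneg hamming_nonneg)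
      qed
    qed
    thus False using gt cost costeq by linarith
  qed
  obtain l where l: "\<forall>k\<in>KK W. 0 \<le> l k" "\<forall>z\<in>W \<times> W. (\<Sum>k\<in>KK W. l k * cA n k z) = 0"
    "(\<Sum>k\<in>KK W. l k * cb \<nu> \<mu> c k) < 0"
    using fm_indexed[OF finWW finite_KK[OF finW] infeas] by blast
  define u where "u x = l (RP x) - l (RN x)" for x
  define v where "v y = l (CP y) - l (CN y)" for y
  define \<beta> where "\<beta> = l Cost"
  have \<beta>0: "0 \<le> \<beta>" using l(1) by (simp add: \<beta>_def KK_def)
  have eqz: "u x + v y + \<beta> * hamming n x y \<ge> 0" if xy: "x \<in> W" "y \<in> W" for x y
  proof -
    have z: "(x, y) \<in> W \<times> W" using xy by simp
    have "0 = (\<Sum>k\<in>KK W. l k * cA n k (x, y))" using l(2) z by simp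
    also have "\<dots> = (\<Sum>z'\<in>W \<times> W. l (Pos z') * cA n (Pos z') (x, y)) + (\<Sum>x'\<in>W. l (RP x') * cA n (RP x') (x, y))
       + (\<Sum>x'\<in>W. l (RN x') * cA n (RN x') (x, y)) + (\<Sum>x'\<in>W. l (CP x') * cA n (CP x') (x, y))
       + (\<Sum>x'\<in>W. l (CN x') * cA n (CN x') (x, y)) + l Cost * cA n Cost (x, y)"
      by (rule sum_KK[OF finW])
    also have "(\<Sum>z'\<in>W \<times> W. l (Pos z') * cA n (Pos z') (x, y)) = - l (Pos (x, y))"
      using sum_mult_delta[OF finWW z, of "\<lambda>z'. l (Pos z')" "-1"] by simp
    also have "(\<Sum>x'\<in>W. l (RP x') * cA n (RP x') (x, y)) = l (RP x)"
      using sum_mult_delta[OF finW xy(1), of "\<lambda>z'. l (RP z')" 1] by simp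
    also have "(\<Sum>x'\<in>W. l (RN x') * cA n (RN x') (x, y)) = - l (RN x)"
      using sum_mult_delta[OF finW xy(1), of "\<lambda>z'. l (RN z')" "-1"] by simp
    also have "(\<Sum>x'\<in>W. l (CP x') * cA n (CP x') (x, y)) = l (CP y)"
      using sum_mult_delta[OF finW xy(2), of "\<lambda>z'. l (CP z')" 1] by simp
    also have "(\<Sum>x'\<in>W. l (CN x') * cA n (CN x') (x, y)) = - l (CN y)"
      using sum_mult_delta[OF finW xy(2), of "\<lambda>z'. l (CN z')" "-1"] by simp
    finally have "u x + v y + \<beta> * hamming n x y = l (Pos (x, y))"
      by (simp add: u_def v_def \<beta>_def)
    moreover have "l (Pos (x, y)) \<ge> 0" using l(1) z by (simp add: KK_def)
    ultimately show ?thesis by simp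
  qed
  have rhs: "(\<Sum>x\<in>W. u x * \<nu> x) + (\<Sum>x\<in>W. v x * \<mu> x) + \<beta> * c < 0"
  proof -
    have "(\<Sum>k\<in>KK W. l k * cb \<nu> \<mu> c k) = (\<Sum>z'\<in>W \<times> W. l (Pos z') * cb \<nu> \<mu> c (Pos z')) + (\<Sum>x'\<in>W. l (RP x') * cb \<nu> \<mu> c (RP x'))
       + (\<Sum>x'\<in>W. l (RN x') * cb \<nu> \<mu> c (RN x')) + (\<Sum>x'\<in>W. l (CP x') * cb \<nu> \<mu> c (CP x'))
       + (\<Sum>x'\<in>W. l (CN x') * cb \<nu> \<mu> c (CN x')) + l Cost * cb \<nu> \<mu> c Cost"
      by (rule sum_KK[OF finW])
    also have "\<dots> = (\<Sum>x\<in>W. u x * \<nu> x) + (\<Sum>x\<in>W. v x * \<mu> x) + \<beta> * c"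
      by (simp add: u_def v_def \<beta>_def algebra_simps sum_subtractf sum_negf)
    finally show ?thesis using l(3) by simp
  qed
  have nusum: "(\<Sum>x\<in>W. \<nu> x) = 1" and nupos: "\<And>x. 0 \<le> \<nu> x"
    using nu unfolding is_prob_def W_def by auto
  have musum: "(\<Sum>x\<in>W. \<mu> x) = 1" and mupos: "\<And>x. 0 \<le> \<mu> x"
    using mu unfolding is_prob_def W_def by auto
  show ?thesis
  proof (cases "\<beta> = 0")
    case True
    obtain x0 where x0: "x0 \<in> W" "\<forall>x\<in>W. u x0 \<le> u x"
      using ex_min_if_finite[OF finite_imageI[OF finW, of u]] neW by fastforce
    obtain y0 where y0: "y0 \<in> W" "\<forall>x\<in>W. v y0 \<le> v x"
      using ex_min_if_finite[OF finite_imageI[OF finW, of v]] neW by fastforce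
    have "(\<Sum>x\<in>W. u x0 * \<nu> x) \<le> (\<Sum>x\<in>W. u x * \<nu> x)"
      using x0 nupos by (intro sum_mono mult_right_mono) auto
    hence a: "u x0 \<le> (\<Sum>x\<in>W. u x * \<nu> x)" by (simp add: sum_distrib_left[symmetric] nusum)
    have "(\<Sum>x\<in>W. v y0 * \<mu> x) \<le> (\<Sum>x\<in>W. v x * \<mu> x)"
      using y0 mupos by (intro sum_mono mult_right_mono) auto
    hence b: "v y0 \<le> (\<Sum>x\<in>W. v x * \<mu> x)" by (simp add: sum_distrib_left[symmetric] musum)
    have "u x0 + v y0 \<ge> 0" using eqz[OF x0(1) y0(1)] True by simp
    thus ?thesis using a b rhs True by simp
  next
    case False
    hence \<beta>pos: "\<beta> > 0" using \<beta>0 by simp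
    define g where "g y = Min ((\<lambda>x. u x / \<beta> + hamming n x y) ` W)" for y
    have g_le: "g y \<le> u x / \<beta> + hamming n x y" if "x \<in> W" for x y
      unfolding g_def using finW that by (intro Min_le) auto
    have g_in: "\<exists>x\<in>W. g y = u x / \<beta> + hamming n x y" for y
    proof -
      have "g y \<in> (\<lambda>x. u x / \<beta> + hamming n x y) ` W" unfolding g_def using finW neW by (intro Min_in) auto
      thus ?thesis by blast
    qed
    have g_up: "g x \<le> u x / \<beta>" if "x \<in> W" for x using g_le[OF that, of x] by (simp add: hamming_self)
    have g_low: "- v y / \<beta> \<le> g y" if "y \<in> W" for y
    proof -
      obtain x where x: "x \<in> W" "g y = u x / \<beta> + hamming n x y" using g_in by blast
      have "u x + v y + \<beta> * hamming n x y \<ge> 0" using eqz[OF x(1) that] .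
      hence "(u x + v y + \<beta> * hamming n x y) / \<beta> \<ge> 0" using \<beta>pos by simp
      hence "u x / \<beta> + v y / \<beta> + hamming n x y \<ge> 0" using \<beta>pos by (simp add: add_divide_distrib)
      thus ?thesis using x(2) by simp
    qed
    have lip: "g y - g x \<le> hamming n x y" if "x \<in> W" "y \<in> W" for x y
    proof -
      obtain x' where x': "x' \<in> W" "g x = u x' / \<beta> + hamming n x' x" using g_in by blast
      have "g y \<le> u x' / \<beta> + hamming n x' y" by (rule g_le[OF x'(1)])
      also have "\<dots> \<le> u x' / \<beta> + hamming n x' x + hamming n x y" using hamming_tri[of n x' y x] by simp
      finally show ?thesis using x'(2) by simp
    qed
    define h where "h x = - g x" for x
    have s1: "(\<Sum>x\<in>W. h x * \<nu> x) \<ge> - (\<Sum>x\<in>W. u x * \<nu> x) / \<beta>"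
    proof -
      have "(\<Sum>x\<in>W. h x * \<nu> x) \<ge> (\<Sum>x\<in>W. (- u x / \<beta>) * \<nu> x)"
        using g_up nupos by (intro sum_mono mult_right_mono) (auto simp: h_def)
      thus ?thesis by (simp add: sum_divide_distrib[symmetric] sum_negf)
    qed
    have s2: "(\<Sum>x\<in>W. h x * \<mu> x) \<le> (\<Sum>x\<in>W. v x * \<mu> x) / \<beta>"
    proof -
      have "(\<Sum>x\<in>W. h x * \<mu> x) \<le> (\<Sum>x\<in>W. (v x / \<beta>) * \<mu> x)"
      proof (intro sum_mono mult_right_mono)
        fix x assume x: "x \<in> W"
        show "h x \<le> v x / \<beta>" using g_low[OF x] unfolding h_def by linarith
      qed (use mupos in auto)
      thus ?thesis by (simp add: sum_divide_distrib[symmetric])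
    qed
    have "(\<Sum>x\<in>W. u x * \<nu> x) + (\<Sum>x\<in>W. v x * \<mu> x) < - \<beta> * c" using rhs by simp
    hence "((\<Sum>x\<in>W. u x * \<nu> x) + (\<Sum>x\<in>W. v x * \<mu> x)) / \<beta> < (- \<beta> * c) / \<beta>"
      using \<beta>pos by (intro divide_strict_right_mono) auto
    hence "(\<Sum>x\<in>W. u x * \<nu> x) / \<beta> + (\<Sum>x\<in>W. v x * \<mu> x) / \<beta> < - c"
      using \<beta>pos by (simp add: add_divide_distrib)
    hence "c < (\<Sum>x\<in>W. h x * \<nu> x) - (\<Sum>x\<in>W. h x * \<mu> x)" using s1 s2 by simp
    moreover have "\<forall>x\<in>W. \<forall>y\<in>W. h x - h y \<le> hamming n x y"
      using lip by (auto simp: h_def)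
    ultimately show ?thesis unfolding W_def by blast
  qed
qed


lemma exp_quad: fixes y :: real assumes "y \<le> 0" shows "exp y \<le> 1 + y + y\<^sup>2 / 2"
proof -
  define f where "f x = 1 + x + x\<^sup>2 / 2 - exp x" for x :: real
  have "f 0 \<le> f y"
  proof (rule DERIV_nonpos_imp_nonincreasing[OF assms])
    fix x :: real assume x: "y \<le> x" "x \<le> 0"
    have "DERIV f x :> 1 + x - exp x" unfolding f_def
      by (auto intro!: derivative_eq_intros simp: power2_eq_square)
    moreover have "1 + x - exp x \<le> 0" using exp_ge_add_one_self[of x] by simp
    ultimately show "\<exists>y. DERIV f x :> y \<and> y \<le> 0" by blast
  qed
  thus ?thesis by (simp add: f_def)
qed

lemma tilt_choice:
  fixes W :: "'b set" and \<mu> g :: "'b \<Rightarrow> real"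
  assumes finW: "finite W" and mupos: "\<And>x. x \<in> W \<Longrightarrow> 0 \<le> \<mu> x" and musum: "(\<Sum>x\<in>W. \<mu> x) = 1"
    and grange: "\<And>x. x \<in> W \<Longrightarrow> -1 \<le> g x \<and> g x \<le> 0"
    and lam: "lam > 0" and r: "r > 0"
    and big: "ln (\<Sum>x\<in>W. \<mu> x * exp (lam * g x)) > lam * (\<Sum>x\<in>W. \<mu> x * g x) + lam * r"
  shows "\<exists>t. r \<le> t \<and> t \<le> lam \<and>
    t * (\<Sum>x\<in>W. \<mu> x * (g x * exp (t * g x))) / (\<Sum>x\<in>W. \<mu> x * exp (t * g x))
       - ln (\<Sum>x\<in>W. \<mu> x * exp (t * g x)) \<ge> r / (2 * lam) * t\<^sup>2"
proof -
  define Z where "Z t = (\<Sum>x\<in>W. \<mu> x * exp (t * g x))" for t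
  define Zd where "Zd t = (\<Sum>x\<in>W. \<mu> x * (g x * exp (t * g x)))" for t
  define m where "m = (\<Sum>x\<in>W. \<mu> x * g x)"
  have Zpos: "Z t > 0" for t
  proof -
    have "\<exists>x\<in>W. \<mu> x \<noteq> 0" using musum by (metis sum.neutral zero_neq_one)
    then obtain x0 where x0: "x0 \<in> W" "\<mu> x0 > 0" using mupos by force
    have "0 < \<mu> x0 * exp (t * g x0)" using x0 by simp
    also have "\<dots> \<le> Z t" unfolding Z_def using finW x0 mupos
      by (intro member_le_sum) auto
    finally show ?thesis .
  qed
  have crude: "ln (Z t) \<le> t * m + t\<^sup>2 / 2" if t: "t \<ge> 0" for t
  proof -
    have "Z t \<le> (\<Sum>x\<in>W. \<mu> x * (1 + t * g x + t\<^sup>2 / 2))" unfolding Z_def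
    proof (intro sum_mono mult_left_mono)
      fix x assume x: "x \<in> W"
      have "t * g x \<le> 0" using grange[OF x] t by (simp add: mult_nonneg_nonpos)
      hence "exp (t * g x) \<le> 1 + t * g x + (t * g x)\<^sup>2 / 2" by (rule exp_quad)
      also have "(t * g x)\<^sup>2 \<le> t\<^sup>2"
      proof -
        have a: "\<bar>g x\<bar> \<le> 1" using grange[OF x] by simp
        have "(g x)\<^sup>2 = \<bar>g x\<bar>\<^sup>2" by simp
        also have "\<dots> \<le> 1" using power_mono[OF a, of 2] by simp
        finally have "(g x)\<^sup>2 \<le> 1" .
        hence "t\<^sup>2 * (g x)\<^sup>2 \<le> t\<^sup>2 * 1" by (intro mult_left_mono) auto
        thus ?thesis by (simp add: power_mult_distrib)
      qed
      finally show "exp (t * g x) \<le> 1 + t * g x + t\<^sup>2 / 2" by simp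
      show "0 \<le> \<mu> x" using mupos x .
    qed
    also have "\<dots> = (\<Sum>x\<in>W. \<mu> x + t * (\<mu> x * g x) + (t\<^sup>2 / 2) * \<mu> x)"
      by (intro sum.cong) (auto simp: algebra_simps)
    also have "\<dots> = (\<Sum>x\<in>W. \<mu> x) + t * m + (t\<^sup>2 / 2) * (\<Sum>x\<in>W. \<mu> x)"
      unfolding m_def by (simp add: sum.distrib sum_distrib_left)
    also have "\<dots> = 1 + t * m + t\<^sup>2 / 2" using musum by simp
    finally have "Z t \<le> 1 + t * m + t\<^sup>2 / 2" .
    moreover have "ln (Z t) \<le> Z t - 1" using ln_le_minus_one[OF Zpos] .
    ultimately show ?thesis by simp
  qed
  have bigZ: "ln (Z lam) > lam * m + lam * r" using big unfolding Z_def m_def .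
  have "lam * r < lam\<^sup>2 / 2" using crude[of lam] bigZ lam by simp
  hence rl: "r < lam / 2" using lam by (simp add: power2_eq_square)
  define H where "H t = ln (Z t) / t" for t
  have derZ: "DERIV Z t :> Zd t" for t unfolding Z_def Zd_def
    by (auto intro!: derivative_eq_intros simp: algebra_simps)
  have derH: "DERIV H t :> (t * Zd t / Z t - ln (Z t)) / t\<^sup>2" if "t > 0" for t
  proof -
    have "DERIV (\<lambda>t. ln (Z t)) t :> Zd t / Z t"
      using DERIV_chain2[OF DERIV_ln[OF Zpos[of t]] derZ] by (simp add: divide_inverse mult.commute)
    from DERIV_divide[OF this DERIV_ident] that
    show ?thesis unfolding H_def by (simp add: power2_eq_square field_simps)
  qed
  obtain t where t: "r < t" "t < lam" "H lam - H r = (lam - r) * ((t * Zd t / Z t - ln (Z t)) / t\<^sup>2)"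
    using MVT2[of r lam H "\<lambda>t. (t * Zd t / Z t - ln (Z t)) / t\<^sup>2"] rl r derH by force
  have Hl: "H lam > m + r" using bigZ lam unfolding H_def by (simp add: field_simps)
  have Hr: "H r \<le> m + r / 2" using crude[of r] r unfolding H_def by (simp add: field_simps power2_eq_square)
  have tpos: "t > 0" using t r by simp
  define ph where "ph = (t * Zd t / Z t - ln (Z t)) / t\<^sup>2"
  have e: "H lam - H r = (lam - r) * ph" using t(3) by (simp only: ph_def)
  have "r / 2 < (lam - r) * ph" using Hl Hr e by linarith
  also have "\<dots> \<le> lam * ph" if "ph \<ge> 0" using that r by (intro mult_right_mono) auto
  finally have "ph \<ge> 0 \<Longrightarrow> r / 2 < lam * ph" .
  moreover have "ph \<ge> 0"
  proof (rule ccontr)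
    assume "\<not> ph \<ge> 0"
    hence "(lam - r) * ph \<le> 0" using rl r by (intro mult_nonneg_nonpos) auto
    thus False using \<open>r / 2 < (lam - r) * ph\<close> r by simp
  qed
  ultimately have "r / 2 < lam * ph" by simp
  hence "r / (2 * lam) < ph" using lam by (simp add: field_simps)
  hence "r / (2 * lam) * t\<^sup>2 \<le> ph * t\<^sup>2" using tpos by (intro mult_right_mono) auto
  also have "ph * t\<^sup>2 = t * Zd t / Z t - ln (Z t)" using tpos unfolding ph_def by simp
  finally show ?thesis using t unfolding Z_def Zd_def by (intro exI[of _ t]) auto
qed


definition fib :: "nat \<Rightarrow> nat \<Rightarrow> (nat \<Rightarrow> 'a::finite) \<Rightarrow> (nat \<Rightarrow> 'a) set" where
  "fib n i x = {y\<in>words n. \<forall>j. j \<noteq> i \<longrightarrow> y j = x j}"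

lemma marg_off_fib: "marg_off n i \<mu> x = (\<Sum>y\<in>fib n i x. \<mu> y)"
  by (simp add: marg_off_def fib_def)

lemma fib_sub: "fib n i x \<subseteq> words n" by (auto simp: fib_def)

lemma fin_fib: "finite (fib n i x)" using finite_subset[OF fib_sub finite_words] .

lemma self_fib: "x \<in> words n \<Longrightarrow> x \<in> fib n i x" by (simp add: fib_def)

lemma ln_split3:
  fixes a1 a2 b w1 w2 w :: real
  assumes "a1 > 0" "a2 > 0" "b > 0" "w1 + w2 = w"
  shows "- w1 * ln a1 - w2 * ln a2 = - w * ln b - (w1 * ln (a1 / b) + w2 * ln (a2 / b))"
  using assms by (simp add: ln_div algebra_simps flip: assms(4))

definition cmi :: "nat \<Rightarrow> ((nat \<Rightarrow> 'a::finite) \<Rightarrow> real) \<Rightarrow> ((nat \<Rightarrow> 'a) \<Rightarrow> real) \<Rightarrow> ((nat \<Rightarrow> 'a) \<Rightarrow> real) \<Rightarrow> nat \<Rightarrow> real" where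
  "cmi n \<mu> \<rho>1 \<rho>2 i = (\<Sum>x\<in>words n.
      integ n \<mu> \<rho>1 * cond_meas n \<mu> \<rho>1 x * ln ((cond_meas n \<mu> \<rho>1 x / marg_off n i (cond_meas n \<mu> \<rho>1) x) / (\<mu> x / marg_off n i \<mu> x))
    + integ n \<mu> \<rho>2 * cond_meas n \<mu> \<rho>2 x * ln ((cond_meas n \<mu> \<rho>2 x / marg_off n i (cond_meas n \<mu> \<rho>2) x) / (\<mu> x / marg_off n i \<mu> x)))"

lemma integ_pos:
  assumes mu: "is_prob n \<mu>" and pos: "\<forall>x\<in>words n. 0 < \<rho> x"
  shows "integ n \<mu> \<rho> > 0"
proof -
  have "\<exists>x\<in>words n. \<mu> x \<noteq> 0" using mu unfolding is_prob_def by (metis sum.neutral zero_neq_one)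
  then obtain x0 where x0': "x0 \<in> words n" "\<mu> x0 \<noteq> 0" by blast
  have x0: "x0 \<in> words n" "\<mu> x0 > 0" using x0' mu unfolding is_prob_def by (auto simp: less_le)
  have "0 < \<rho> x0 * \<mu> x0" using x0 pos by simp
  also have "\<dots> \<le> integ n \<mu> \<rho>" unfolding integ_def using finite_words x0 pos mu
    by (intro member_le_sum) (auto simp: is_prob_def less_imp_le)
  finally show ?thesis .
qed

lemma ident:
  fixes \<mu> :: "(nat \<Rightarrow> 'a::finite) \<Rightarrow> real"
  assumes mu: "is_prob n \<mu>" and pos: "\<forall>x\<in>words n. 0 < \<rho>1 x \<and> 0 < \<rho>2 x \<and> \<rho>1 x + \<rho>2 x = 1"
  shows "integ n \<mu> \<rho>1 * DTC n (cond_meas n \<mu> \<rho>1) + integ n \<mu> \<rho>2 * DTC n (cond_meas n \<mu> \<rho>2)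
     = DTC n \<mu> - mutual_info2 n \<mu> \<rho>1 \<rho>2 + (\<Sum>i<n. cmi n \<mu> \<rho>1 \<rho>2 i)"
proof -
  define W where "W = (words n :: (nat \<Rightarrow> 'a) set)"
  define P1 where "P1 = integ n \<mu> \<rho>1"
  define P2 where "P2 = integ n \<mu> \<rho>2"
  define q1 where "q1 = cond_meas n \<mu> \<rho>1"
  define q2 where "q2 = cond_meas n \<mu> \<rho>2"
  have P1: "P1 > 0" unfolding P1_def using integ_pos[OF mu] pos by auto
  have P2: "P2 > 0" unfolding P2_def using integ_pos[OF mu] pos by auto
  have mupos: "\<And>x. 0 \<le> \<mu> x" using mu by (simp add: is_prob_def)
  have q1e: "P1 * q1 x = \<rho>1 x * \<mu> x" for x using P1 by (simp add: q1_def cond_meas_def P1_def)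
  have q2e: "P2 * q2 x = \<rho>2 x * \<mu> x" for x using P2 by (simp add: q2_def cond_meas_def P2_def)
  have wsum: "P1 * q1 x + P2 * q2 x = \<mu> x" if "x \<in> W" for x
    using pos that unfolding q1e q2e W_def by (simp add: distrib_right[symmetric])
  have q1pos: "q1 x > 0" if "x \<in> W" "\<mu> x > 0" for x
    using pos that P1 unfolding q1_def cond_meas_def P1_def W_def by simp
  have q2pos: "q2 x > 0" if "x \<in> W" "\<mu> x > 0" for x
    using pos that P2 unfolding q2_def cond_meas_def P2_def W_def by simp
  have q1nn: "q1 x \<ge> 0" if "x \<in> W" for x
    using pos that P1 mupos unfolding q1_def cond_meas_def P1_def W_def by (simp add: less_imp_le)
  have q2nn: "q2 x \<ge> 0" if "x \<in> W" for x
    using pos that P2 mupos unfolding q2_def cond_meas_def P2_def W_def by (simp add: less_imp_le)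
  have q1z: "q1 x = 0" if "\<mu> x = 0" for x using that by (simp add: q1_def cond_meas_def)
  have q2z: "q2 x = 0" if "\<mu> x = 0" for x using that by (simp add: q2_def cond_meas_def)
  have E1: "P1 * entropy n q1 + P2 * entropy n q2 = entropy n \<mu> - mutual_info2 n \<mu> \<rho>1 \<rho>2"
  proof -
    have "P1 * entropy n q1 + P2 * entropy n q2 = (\<Sum>x\<in>W. - (P1 * q1 x) * ln (q1 x) - (P2 * q2 x) * ln (q2 x))"
      unfolding entropy_def W_def by (simp add: sum_distrib_left sum.distrib sum_negf algebra_simps sum_subtractf)
    also have "\<dots> = (\<Sum>x\<in>W. - \<mu> x * ln (\<mu> x) - ((P1 * q1 x) * ln (q1 x / \<mu> x) + (P2 * q2 x) * ln (q2 x / \<mu> x)))"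
    proof (intro sum.cong refl)
      fix x assume x: "x \<in> W"
      show "- (P1 * q1 x) * ln (q1 x) - (P2 * q2 x) * ln (q2 x) =
          - \<mu> x * ln (\<mu> x) - ((P1 * q1 x) * ln (q1 x / \<mu> x) + (P2 * q2 x) * ln (q2 x / \<mu> x))"
      proof (cases "\<mu> x = 0")
        case True thus ?thesis using q1z q2z by simp
      next
        case False
        hence mp: "\<mu> x > 0" using mupos[of x] by simp
        show ?thesis by (rule ln_split3[OF q1pos[OF x mp] q2pos[OF x mp] mp wsum[OF x]])
      qed
    qed
    also have "\<dots> = entropy n \<mu> - mutual_info2 n \<mu> \<rho>1 \<rho>2"
      unfolding entropy_def mutual_info2_def KL_def W_def P1_def[symmetric] P2_def[symmetric] q1_def[symmetric] q2_def[symmetric]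
      by (simp add: sum_distrib_left sum.distrib sum_negf algebra_simps sum_subtractf)
    finally show ?thesis .
  qed
  have E2: "P1 * cond_entropy n i q1 + P2 * cond_entropy n i q2 = cond_entropy n i \<mu> - cmi n \<mu> \<rho>1 \<rho>2 i" for i
  proof -
    have "P1 * cond_entropy n i q1 + P2 * cond_entropy n i q2 =
       (\<Sum>x\<in>W. - (P1 * q1 x) * ln (q1 x / marg_off n i q1 x) - (P2 * q2 x) * ln (q2 x / marg_off n i q2 x))"
      unfolding cond_entropy_def W_def by (simp add: sum_distrib_left sum.distrib sum_negf algebra_simps sum_subtractf)
    also have "\<dots> = (\<Sum>x\<in>W. - \<mu> x * ln (\<mu> x / marg_off n i \<mu> x)
        - ((P1 * q1 x) * ln ((q1 x / marg_off n i q1 x) / (\<mu> x / marg_off n i \<mu> x))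
         + (P2 * q2 x) * ln ((q2 x / marg_off n i q2 x) / (\<mu> x / marg_off n i \<mu> x))))"
    proof (intro sum.cong refl)
      fix x assume x: "x \<in> W"
      show "- (P1 * q1 x) * ln (q1 x / marg_off n i q1 x) - (P2 * q2 x) * ln (q2 x / marg_off n i q2 x) =
        - \<mu> x * ln (\<mu> x / marg_off n i \<mu> x)
        - ((P1 * q1 x) * ln ((q1 x / marg_off n i q1 x) / (\<mu> x / marg_off n i \<mu> x))
         + (P2 * q2 x) * ln ((q2 x / marg_off n i q2 x) / (\<mu> x / marg_off n i \<mu> x)))"
      proof (cases "\<mu> x = 0")
        case True thus ?thesis using q1z q2z by simp
      next
        case False
        hence mp: "\<mu> x > 0" using mupos[of x] by simp
        have xf: "x \<in> fib n i x" using x by (simp add: self_fib W_def)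
        have ge: "f x \<le> marg_off n i f x" if "\<forall>y\<in>W. f y \<ge> 0" for f
          unfolding marg_off_fib using that fib_sub[of n i x] xf
          by (intro member_le_sum[OF xf _ fin_fib]) (auto simp: W_def)
        have m1: "marg_off n i q1 x > 0" using ge[of q1] q1nn q1pos[OF x mp] by force
        have m2: "marg_off n i q2 x > 0" using ge[of q2] q2nn q2pos[OF x mp] by force
        have m0: "marg_off n i \<mu> x > 0" using ge[of \<mu>] mupos mp by force
        show ?thesis
          by (rule ln_split3) (use q1pos[OF x mp] q2pos[OF x mp] mp m1 m2 m0 wsum[OF x] in auto)
      qed
    qed
    also have "\<dots> = cond_entropy n i \<mu> - cmi n \<mu> \<rho>1 \<rho>2 i"
      unfolding cond_entropy_def cmi_def W_def P1_def[symmetric] P2_def[symmetric] q1_def[symmetric] q2_def[symmetric]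
      by (simp add: sum_distrib_left sum.distrib sum_negf algebra_simps sum_subtractf)
    finally show ?thesis .
  qed
  have "P1 * DTC n q1 + P2 * DTC n q2 = (P1 * entropy n q1 + P2 * entropy n q2)
      - (\<Sum>i<n. P1 * cond_entropy n i q1 + P2 * cond_entropy n i q2)"
    unfolding DTC_def by (simp add: algebra_simps sum_distrib_left sum.distrib)
  also have "\<dots> = DTC n \<mu> - mutual_info2 n \<mu> \<rho>1 \<rho>2 + (\<Sum>i<n. cmi n \<mu> \<rho>1 \<rho>2 i)"
    unfolding E1 E2 DTC_def by (simp add: sum_subtractf)
  finally show ?thesis unfolding P1_def P2_def q1_def q2_def .
qed

lemma kl2_bound:
  fixes a b d :: real
  assumes a: "0 < a" "a \<le> 1/2" and d: "0 \<le> d" "d \<le> 1/4"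
    and b: "a * exp (- d) \<le> b" "b \<le> a * exp d"
  shows "a * ln (a / b) + (1 - a) * ln ((1 - a) / (1 - b)) \<le> 32 * d\<^sup>2 * a"
proof -
  have e1: "exp d \<le> 1 + 2 * d" using real_exp_bound_lemma[of d] d by simp
  have e2: "1 - d \<le> exp (- d)" using exp_ge_add_one_self[of "-d"] by simp
  have bl: "a * (1 - d) \<le> b" using b(1) e2 a by (meson mult_left_mono less_imp_le order_trans)
  have bu: "b \<le> a * (1 + 2 * d)" using b(2) e1 a by (meson mult_left_mono less_imp_le order_trans)
  have "a * (3/4) \<le> a * (1 - d)" using a d by (intro mult_left_mono) auto
  hence bpos: "b \<ge> 3 / 4 * a" using bl by simp
  have b0: "b > 0" using bpos a by simp
  have b1: "1 - b \<ge> 1/4"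
  proof -
    have "a * (1 + 2 * d) \<le> 1/2 * (3/2)" using a d by (intro mult_mono) auto
    thus ?thesis using bu by simp
  qed
  have ab: "\<bar>a - b\<bar> \<le> 2 * d * a"
  proof -
    have "b - a \<le> 2 * d * a" using bu by (simp add: algebra_simps)
    moreover have "a - b \<le> 2 * d * a"
    proof -
      have "0 \<le> d * a" using a d by simp
      thus ?thesis using bl by (simp add: algebra_simps)
    qed
    ultimately show ?thesis by simp
  qed
  have l1: "ln (a / b) \<le> a / b - 1" using a b0 by (intro ln_le_minus_one) simp
  have l2: "ln ((1 - a) / (1 - b)) \<le> (1 - a) / (1 - b) - 1" using a b1 by (intro ln_le_minus_one) simp
  have "a * ln (a / b) + (1 - a) * ln ((1 - a) / (1 - b)) \<le> a * (a / b - 1) + (1 - a) * ((1 - a) / (1 - b) - 1)"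
    using a l1 l2 by (intro add_mono mult_left_mono) auto
  also have "\<dots> = (a - b)\<^sup>2 / (b * (1 - b))"
    using b0 b1 by (simp add: field_simps power2_eq_square)
  also have "\<dots> \<le> (2 * d * a)\<^sup>2 / (3 / 4 * a * (1/4))"
  proof (rule frac_le)
    show "0 \<le> (2 * d * a)\<^sup>2" by simp
    have "\<bar>a - b\<bar>\<^sup>2 \<le> (2 * d * a)\<^sup>2" by (rule power_mono[OF ab]) simp
    thus "(a - b)\<^sup>2 \<le> (2 * d * a)\<^sup>2" by simp
    show "0 < 3 / 4 * a * (1 / 4)" using a by simp
    show "3 / 4 * a * (1 / 4) \<le> b * (1 - b)" using bpos b1 a by (intro mult_mono) auto
  qed
  also have "\<dots> = 64 / 3 * d\<^sup>2 * a" using a by (simp add: field_simps power2_eq_square)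
  also have "\<dots> \<le> 32 * d\<^sup>2 * a" using a by (intro mult_right_mono) auto
  finally show ?thesis .
qed

lemma cmi_bound:
  fixes \<mu> :: "(nat \<Rightarrow> 'a::finite) \<Rightarrow> real"
  assumes mu: "is_prob n \<mu>"
    and r1: "\<forall>x\<in>words n. 0 < \<rho>1 x \<and> \<rho>1 x \<le> 1/2 \<and> \<rho>2 x = 1 - \<rho>1 x"
    and d: "0 \<le> d" "d \<le> 1/4"
    and close: "\<forall>x\<in>words n. \<forall>y\<in>fib n i x. \<rho>1 x * exp (- d) \<le> \<rho>1 y \<and> \<rho>1 y \<le> \<rho>1 x * exp d"
  shows "cmi n \<mu> \<rho>1 \<rho>2 i \<le> 32 * d\<^sup>2 * integ n \<mu> \<rho>1"
proof -
  define W where "W = (words n :: (nat \<Rightarrow> 'a) set)"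
  have mupos: "\<And>x. 0 \<le> \<mu> x" using mu by (simp add: is_prob_def)
  have pos: "\<forall>x\<in>words n. 0 < \<rho>1 x \<and> 0 < \<rho>2 x \<and> \<rho>1 x + \<rho>2 x = 1" using r1 by auto
  have P1: "integ n \<mu> \<rho>1 > 0" using integ_pos[OF mu] pos by auto
  have P2: "integ n \<mu> \<rho>2 > 0" using integ_pos[OF mu] pos by auto
  have mq: "marg_off n i (cond_meas n \<mu> \<rho>) x = (\<Sum>y\<in>fib n i x. \<rho> y * \<mu> y) / integ n \<mu> \<rho>" for \<rho> x
    unfolding marg_off_fib cond_meas_def by (simp add: sum_divide_distrib)
  have pw: "integ n \<mu> \<rho>1 * cond_meas n \<mu> \<rho>1 x * ln ((cond_meas n \<mu> \<rho>1 x / marg_off n i (cond_meas n \<mu> \<rho>1) x) / (\<mu> x / marg_off n i \<mu> x))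
    + integ n \<mu> \<rho>2 * cond_meas n \<mu> \<rho>2 x * ln ((cond_meas n \<mu> \<rho>2 x / marg_off n i (cond_meas n \<mu> \<rho>2) x) / (\<mu> x / marg_off n i \<mu> x))
    \<le> 32 * d\<^sup>2 * (\<rho>1 x * \<mu> x)" if x: "x \<in> W" for x
  proof (cases "\<mu> x = 0")
    case True thus ?thesis by (simp add: cond_meas_def)
  next
    case False
    hence mp: "\<mu> x > 0" using mupos[of x] by simp
    define F where "F = fib n i x"
    have xF: "x \<in> F" using x by (simp add: F_def self_fib W_def)
    have FW: "F \<subseteq> W" by (simp add: F_def fib_sub W_def)
    have finF: "finite F" by (simp add: F_def fin_fib)
    define S where "S = (\<Sum>y\<in>F. \<mu> y)"
    define S1 where "S1 = (\<Sum>y\<in>F. \<rho>1 y * \<mu> y)"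
    define S2 where "S2 = (\<Sum>y\<in>F. \<rho>2 y * \<mu> y)"
    have Spos: "S > 0"
    proof -
      have "\<mu> x \<le> S" unfolding S_def using xF finF mupos by (intro member_le_sum) auto
      thus ?thesis using mp by simp
    qed
    define a where "a = \<rho>1 x"
    have a: "0 < a" "a \<le> 1/2" using r1 x by (auto simp: a_def W_def)
    have S1u: "S1 \<le> a * exp d * S"
    proof -
      have "S1 \<le> (\<Sum>y\<in>F. (a * exp d) * \<mu> y)" unfolding S1_def
        using close x FW mupos unfolding a_def F_def W_def by (intro sum_mono mult_right_mono) auto
      thus ?thesis by (simp add: S_def sum_distrib_left)
    qed
    have S1l: "a * exp (- d) * S \<le> S1"
    proof -
      have "(\<Sum>y\<in>F. (a * exp (- d)) * \<mu> y) \<le> S1" unfolding S1_def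
        using close x FW mupos unfolding a_def F_def W_def by (intro sum_mono mult_right_mono) auto
      thus ?thesis by (simp add: S_def sum_distrib_left)
    qed
    define b where "b = S1 / S"
    have bu: "b \<le> a * exp d" using S1u Spos by (simp add: b_def divide_le_eq)
    have bl: "a * exp (- d) \<le> b" using S1l Spos by (simp add: b_def le_divide_eq)
    have S2e: "S2 = S - S1"
    proof -
      have "S2 = (\<Sum>y\<in>F. \<mu> y - \<rho>1 y * \<mu> y)" unfolding S2_def
      proof (intro sum.cong refl)
        fix y assume "y \<in> F"
        hence "\<rho>2 y = 1 - \<rho>1 y" using r1 FW by (auto simp: W_def)
        thus "\<rho>2 y * \<mu> y = \<mu> y - \<rho>1 y * \<mu> y" by (simp only: left_diff_distrib mult_1)
      qed
      thus ?thesis by (simp add: S_def S1_def sum_subtractf)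
    qed
    have b1: "1 - b = S2 / S" using Spos by (simp add: b_def S2e field_simps)
    have "0 < a * exp (- d)" using a by simp
    hence bpos: "b > 0" using bl by linarith
    have S1pos: "S1 > 0" using bpos Spos by (simp add: b_def zero_less_divide_iff)
    have b1pos: "1 - b > 0"
    proof -
      have "a * exp d \<le> 1/2 * exp (1/4)" using a d by (intro mult_mono) auto
      also have "exp (1/4::real) \<le> 1 + 2 * (1/4)" by (rule real_exp_bound_lemma) auto
      finally show ?thesis using bu by simp
    qed
    have S2pos: "S2 > 0" using b1pos Spos b1 by (simp add: zero_less_divide_iff)
    have r2: "\<rho>2 x = 1 - a" using r1 x by (simp add: a_def W_def)
    have t1: "integ n \<mu> \<rho>1 * cond_meas n \<mu> \<rho>1 x = a * \<mu> x" using P1 by (simp add: cond_meas_def a_def)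
    have t2: "integ n \<mu> \<rho>2 * cond_meas n \<mu> \<rho>2 x = (1 - a) * \<mu> x" using P2 r2 by (simp add: cond_meas_def)
    have M1: "marg_off n i (cond_meas n \<mu> \<rho>1) x = S1 / integ n \<mu> \<rho>1"
      using mq[of \<rho>1] by (simp add: F_def S1_def)
    have M2: "marg_off n i (cond_meas n \<mu> \<rho>2) x = S2 / integ n \<mu> \<rho>2"
      using mq[of \<rho>2] by (simp add: F_def S2_def)
    have M0: "marg_off n i \<mu> x = S" by (simp add: marg_off_fib F_def S_def)
    have rat1: "(cond_meas n \<mu> \<rho>1 x / marg_off n i (cond_meas n \<mu> \<rho>1) x) / (\<mu> x / marg_off n i \<mu> x) = a / b"
      unfolding M1 M0 b_def cond_meas_def
      using P1 Spos mp S1pos by (simp add: a_def field_simps)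
    have rat2: "(cond_meas n \<mu> \<rho>2 x / marg_off n i (cond_meas n \<mu> \<rho>2) x) / (\<mu> x / marg_off n i \<mu> x) = (1 - a) / (1 - b)"
      unfolding M2 M0 b1 cond_meas_def r2
      using P2 Spos mp S2pos by (simp add: field_simps)
    have "a * ln (a / b) + (1 - a) * ln ((1 - a) / (1 - b)) \<le> 32 * d\<^sup>2 * a"
      by (rule kl2_bound[OF a d bl bu])
    hence "\<mu> x * (a * ln (a / b) + (1 - a) * ln ((1 - a) / (1 - b))) \<le> \<mu> x * (32 * d\<^sup>2 * a)"
      using mp by (intro mult_left_mono) auto
    thus ?thesis unfolding t1 t2 rat1 rat2 by (simp add: algebra_simps a_def)
  qed
  have "cmi n \<mu> \<rho>1 \<rho>2 i \<le> (\<Sum>x\<in>W. 32 * d\<^sup>2 * (\<rho>1 x * \<mu> x))"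
    unfolding cmi_def W_def[symmetric] by (intro sum_mono pw)
  also have "\<dots> = 32 * d\<^sup>2 * integ n \<mu> \<rho>1" by (simp add: integ_def W_def sum_distrib_left)
  finally show ?thesis .
qed


lemma ln_ge_1m: fixes y :: real assumes "y > 0" shows "1 - 1 / y \<le> ln y"
proof -
  have "ln (1 / y) \<le> 1 / y - 1" using assms by (intro ln_le_minus_one) simp
  thus ?thesis using assms by (simp add: ln_div)
qed

lemma DV:
  fixes \<mu> \<nu> :: "(nat \<Rightarrow> 'a::finite) \<Rightarrow> real"
  assumes mu: "is_prob n \<mu>" and nu: "is_prob n \<nu>" and ac: "abs_cont n \<nu> \<mu>"
  shows "KL n \<nu> \<mu> \<ge> lam * (\<Sum>x\<in>words n. \<nu> x * g x) - ln (\<Sum>x\<in>words n. \<mu> x * exp (lam * g x))"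
proof -
  define W where "W = (words n :: (nat \<Rightarrow> 'a) set)"
  define Z where "Z = (\<Sum>x\<in>W. \<mu> x * exp (lam * g x))"
  have mupos: "\<And>x. 0 \<le> \<mu> x" and musum: "(\<Sum>x\<in>W. \<mu> x) = 1" using mu by (auto simp: is_prob_def W_def)
  have nupos: "\<And>x. 0 \<le> \<nu> x" and nusum: "(\<Sum>x\<in>W. \<nu> x) = 1" using nu by (auto simp: is_prob_def W_def)
  have Zpos: "Z > 0"
  proof -
    have "\<exists>x\<in>W. \<mu> x \<noteq> 0" using musum by (metis sum.neutral zero_neq_one)
    then obtain x0 where x0: "x0 \<in> W" "\<mu> x0 \<noteq> 0" by blast
    hence "0 < \<mu> x0 * exp (lam * g x0)" using mupos[of x0] by (simp add: less_le)
    also have "\<dots> \<le> Z" unfolding Z_def using finite_words x0 mupos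
      by (intro member_le_sum) (auto simp: W_def)
    finally show ?thesis .
  qed
  have pw: "\<nu> x * ln (\<nu> x / \<mu> x) - lam * (\<nu> x * g x) + \<nu> x * ln Z \<ge> \<nu> x - \<mu> x * exp (lam * g x) / Z"
    if x: "x \<in> W" for x
  proof (cases "\<nu> x = 0")
    case True thus ?thesis using mupos[of x] Zpos by simp
  next
    case False
    hence np: "\<nu> x > 0" using nupos[of x] by simp
    have "\<mu> x \<noteq> 0" using ac x np unfolding abs_cont_def W_def by auto
    hence mp: "\<mu> x > 0" using mupos[of x] by simp
    define y where "y = \<nu> x * Z / (\<mu> x * exp (lam * g x))"
    have ypos: "y > 0" using np Zpos mp by (simp add: y_def)
    have ly: "ln y = ln (\<nu> x / \<mu> x) - lam * g x + ln Z"
      unfolding y_def using np Zpos mp by (simp add: ln_div ln_mult)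
    have "\<nu> x * (1 - 1 / y) \<le> \<nu> x * ln y" using ln_ge_1m[OF ypos] np by (intro mult_left_mono) auto
    moreover have "\<nu> x * (1 - 1 / y) = \<nu> x - \<mu> x * exp (lam * g x) / Z"
      unfolding y_def using np Zpos mp by (simp add: field_simps)
    ultimately show ?thesis unfolding ly by (simp add: algebra_simps)
  qed
  have "(\<Sum>x\<in>W. \<nu> x - \<mu> x * exp (lam * g x) / Z) \<le>
        (\<Sum>x\<in>W. \<nu> x * ln (\<nu> x / \<mu> x) - lam * (\<nu> x * g x) + \<nu> x * ln Z)"
    by (intro sum_mono pw)
  also have "\<dots> = KL n \<nu> \<mu> - lam * (\<Sum>x\<in>W. \<nu> x * g x) + ln Z"
    unfolding KL_def W_def[symmetric]
    by (simp add: sum.distrib sum_subtractf sum_distrib_left[symmetric] sum_distrib_right[symmetric] nusum)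
  finally have "(\<Sum>x\<in>W. \<nu> x - \<mu> x * exp (lam * g x) / Z) \<le> KL n \<nu> \<mu> - lam * (\<Sum>x\<in>W. \<nu> x * g x) + ln Z" .
  moreover have "(\<Sum>x\<in>W. \<nu> x - \<mu> x * exp (lam * g x) / Z) = 0"
    using Zpos by (simp add: sum_subtractf sum_divide_distrib[symmetric] nusum Z_def)
  ultimately show ?thesis unfolding Z_def W_def by simp
qed

lemma PKL:
  fixes \<mu> :: "(nat \<Rightarrow> 'a::finite) \<Rightarrow> real"
  assumes mu: "is_prob n \<mu>" and pos: "\<forall>x\<in>words n. 0 < \<rho> x"
  shows "integ n \<mu> \<rho> * KL n (cond_meas n \<mu> \<rho>) \<mu> = (\<Sum>x\<in>words n. \<rho> x * \<mu> x * ln (\<rho> x / integ n \<mu> \<rho>))"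
proof -
  have P: "integ n \<mu> \<rho> > 0" by (rule integ_pos[OF mu pos])
  have "integ n \<mu> \<rho> * KL n (cond_meas n \<mu> \<rho>) \<mu> = (\<Sum>x\<in>words n. integ n \<mu> \<rho> * (cond_meas n \<mu> \<rho> x * ln (cond_meas n \<mu> \<rho> x / \<mu> x)))"
    unfolding KL_def by (simp add: sum_distrib_left)
  also have "\<dots> = (\<Sum>x\<in>words n. \<rho> x * \<mu> x * ln (\<rho> x / integ n \<mu> \<rho>))"
  proof (intro sum.cong refl)
    fix x :: "nat \<Rightarrow> 'a" assume x: "x \<in> words n"
    show "integ n \<mu> \<rho> * (cond_meas n \<mu> \<rho> x * ln (cond_meas n \<mu> \<rho> x / \<mu> x)) = \<rho> x * \<mu> x * ln (\<rho> x / integ n \<mu> \<rho>)"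
    proof (cases "\<mu> x = 0")
      case True thus ?thesis by (simp add: cond_meas_def)
    next
      case False
      have "cond_meas n \<mu> \<rho> x / \<mu> x = \<rho> x / integ n \<mu> \<rho>" using False by (simp add: cond_meas_def)
      thus ?thesis using P by (simp add: cond_meas_def)
    qed
  qed
  finally show ?thesis .
qed

lemma fib_hamming:
  assumes "i < n" "y \<in> fib n i x"
  shows "hamming n x y \<le> 1 / real n"
proof -
  have "{k. k < n \<and> x k \<noteq> y k} \<subseteq> {i}" using assms by (auto simp: fib_def)
  hence "card {k. k < n \<and> x k \<noteq> y k} \<le> card {i}" by (intro card_mono) auto
  hence "real (card {k. k < n \<and> x k \<noteq> y k}) \<le> 1" by simp
  thus ?thesis unfolding hamming_def by (intro divide_right_mono) auto
qed

lemma diff_le_coupling: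
  fixes \<mu> \<nu> :: "(nat \<Rightarrow> 'a::finite) \<Rightarrow> real"
  assumes mu: "is_prob n \<mu>" and nu: "is_prob n \<nu>"
    and lip: "\<forall>x\<in>words n. \<forall>y\<in>words n. h x - h y \<le> hamming n x y"
  shows "(\<Sum>x\<in>words n. h x * \<nu> x) - (\<Sum>x\<in>words n. h x * \<mu> x) \<le> (\<Sum>x\<in>words n. \<Sum>y\<in>words n. hamming n x y * \<nu> x * \<mu> y)"
proof -
  define W where "W = (words n :: (nat \<Rightarrow> 'a) set)"
  have mupos: "\<And>x. 0 \<le> \<mu> x" and musum: "(\<Sum>x\<in>W. \<mu> x) = 1" using mu by (auto simp: is_prob_def W_def)
  have nupos: "\<And>x. 0 \<le> \<nu> x" and nusum: "(\<Sum>x\<in>W. \<nu> x) = 1" using nu by (auto simp: is_prob_def W_def)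
  have e: "(\<Sum>x\<in>W. h x * \<nu> x) - (\<Sum>x\<in>W. h x * \<mu> x) = (\<Sum>x\<in>W. \<Sum>y\<in>W. (h x - h y) * \<nu> x * \<mu> y)"
  proof -
    have "(\<Sum>x\<in>W. \<Sum>y\<in>W. (h x - h y) * \<nu> x * \<mu> y) = (\<Sum>x\<in>W. \<Sum>y\<in>W. h x * \<nu> x * \<mu> y) - (\<Sum>x\<in>W. \<Sum>y\<in>W. \<nu> x * (h y * \<mu> y))"
      by (simp add: sum_subtractf algebra_simps)
    also have "\<dots> = (\<Sum>x\<in>W. h x * \<nu> x) - (\<Sum>x\<in>W. h x * \<mu> x)"
      by (simp add: sum_distrib_left[symmetric] sum_distrib_right[symmetric] musum nusum)
    finally show ?thesis by simp
  qed
  show ?thesis unfolding W_def[symmetric] e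
    using lip nupos mupos by (intro sum_mono mult_right_mono) (auto simp: W_def)
qed

theorem proposition6p2:
  fixes \<mu> :: "(nat \<Rightarrow> 'a::finite) \<Rightarrow> real" and n :: nat and r :: real
  assumes "is_prob n \<mu>" and "r > 0"
    and "\<not> transport_ineq n \<mu> (r * real n / 200) r"
  shows "\<exists>\<rho>1 \<rho>2. fuzzy_partition2 n \<rho>1 \<rho>2
    \<and> mutual_info2 n \<mu> \<rho>1 \<rho>2 \<ge> r\<^sup>2 / real n * exp (- real n)
    \<and> integ n \<mu> \<rho>1 * DTC n (cond_meas n \<mu> \<rho>1) + integ n \<mu> \<rho>2 * DTC n (cond_meas n \<mu> \<rho>2)
        \<le> DTC n \<mu> - mutual_info2 n \<mu> \<rho>1 \<rho>2 / 2"
proof -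
  note mu = assms(1) and r = assms(2)
  define W where "W = (words n :: (nat \<Rightarrow> 'a) set)"
  have finW: "finite W" unfolding W_def by (rule finite_words)
  have neW: "W \<noteq> {}" unfolding W_def by (rule words_ne)
  have mupos: "\<And>x. 0 \<le> \<mu> x" and musum: "(\<Sum>x\<in>W. \<mu> x) = 1" using mu by (auto simp: is_prob_def W_def)
  define lam where "lam = r * real n / 200"
  obtain \<nu> where nu: "is_prob n \<nu>" and ac: "abs_cont n \<nu> \<mu>"
    and gt: "(1 / lam) * KL n \<nu> \<mu> + r < transport_dist n \<nu> \<mu>"
    using assms(3) unfolding transport_ineq_def lam_def by force
  have nupos: "\<And>x. 0 \<le> \<nu> x" and nusum: "(\<Sum>x\<in>W. \<nu> x) = 1" using nu by (auto simp: is_prob_def W_def)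
  obtain h where lip: "\<forall>x\<in>words n. \<forall>y\<in>words n. h x - h y \<le> hamming n x y"
    and hgt: "(1 / lam) * KL n \<nu> \<mu> + r < (\<Sum>x\<in>words n. h x * \<nu> x) - (\<Sum>x\<in>words n. h x * \<mu> x)"
    using transport_dual[OF nu mu gt] by blast
  have npos: "n > 0"
  proof (rule ccontr)
    assume "\<not> n > 0"
    hence n0: "n = 0" by simp
    have "(\<Sum>x\<in>words n. h x * \<nu> x) - (\<Sum>x\<in>words n. h x * \<mu> x) \<le> (\<Sum>x\<in>words n. \<Sum>y\<in>words n. hamming n x y * \<nu> x * \<mu> y)"
      by (rule diff_le_coupling[OF mu nu lip])
    also have "\<dots> = 0" using n0 by (simp add: hamming_def)
    finally show False using hgt n0 r by (simp add: lam_def)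
  qed
  have lampos: "lam > 0" using npos r by (simp add: lam_def)
  define M where "M = Max (h ` W)"
  define g where "g x = h x - M" for x
  have grange: "-1 \<le> g x \<and> g x \<le> 0" if x: "x \<in> W" for x
  proof -
    have "h x \<le> M" unfolding M_def using finW x by (intro Max_ge) auto
    moreover have "M \<in> h ` W" unfolding M_def using finW neW by (intro Max_in) auto
    then obtain x' where x': "x' \<in> W" "M = h x'" by blast
    have "h x' - h x \<le> hamming n x' x" using lip x x' unfolding W_def by blast
    moreover have "hamming n x' x \<le> 1" by (rule hamming_le1)
    ultimately show ?thesis using x' unfolding g_def by linarith
  qed
  have glip: "g x - g y \<le> hamming n x y" if "x \<in> W" "y \<in> W" for x y
    using lip that unfolding g_def W_def by auto
  define m where "m = (\<Sum>x\<in>W. \<mu> x * g x)"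
  have gdiff: "(\<Sum>x\<in>W. \<nu> x * g x) - m = (\<Sum>x\<in>words n. h x * \<nu> x) - (\<Sum>x\<in>words n. h x * \<mu> x)"
  proof -
    have "(\<Sum>x\<in>W. \<nu> x * g x) = (\<Sum>x\<in>W. h x * \<nu> x) - M * (\<Sum>x\<in>W. \<nu> x)"
      unfolding g_def by (simp add: algebra_simps sum_subtractf sum_distrib_left)
    moreover have "m = (\<Sum>x\<in>W. h x * \<mu> x) - M * (\<Sum>x\<in>W. \<mu> x)"
      unfolding m_def g_def by (simp add: algebra_simps sum_subtractf sum_distrib_left)
    ultimately show ?thesis using musum nusum by (simp add: W_def)
  qed
  define Z where "Z t = (\<Sum>x\<in>W. \<mu> x * exp (t * g x))" for t
  define Zd where "Zd t = (\<Sum>x\<in>W. \<mu> x * (g x * exp (t * g x)))" for t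
  have dv: "KL n \<nu> \<mu> \<ge> lam * (\<Sum>x\<in>W. \<nu> x * g x) - ln (Z lam)"
    using DV[OF mu nu ac, of lam g] unfolding Z_def W_def .
  have big: "ln (Z lam) > lam * m + lam * r"
  proof -
    have "KL n \<nu> \<mu> / lam + r < (\<Sum>x\<in>W. \<nu> x * g x) - m" using hgt gdiff by simp
    hence "lam * (KL n \<nu> \<mu> / lam + r) < lam * ((\<Sum>x\<in>W. \<nu> x * g x) - m)"
      using lampos by (intro mult_strict_left_mono) auto
    hence "KL n \<nu> \<mu> + lam * r < lam * (\<Sum>x\<in>W. \<nu> x * g x) - lam * m"
      using lampos by (simp add: algebra_simps)
    thus ?thesis using dv by linarith
  qed
  have r1: "r < 1"
  proof -
    have "Z lam \<le> (\<Sum>x\<in>W. \<mu> x * 1)" unfolding Z_def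
    proof (intro sum_mono mult_left_mono)
      fix x assume "x \<in> W"
      hence "lam * g x \<le> 0" using grange lampos by (simp add: mult_nonneg_nonpos less_imp_le)
      thus "exp (lam * g x) \<le> 1" by simp
    qed (use mupos in auto)
    hence Z1: "Z lam \<le> 1" using musum by simp
    have Zp: "Z lam > 0"
    proof -
      have "\<exists>x\<in>W. \<mu> x \<noteq> 0" using musum by (metis sum.neutral zero_neq_one)
      then obtain x0 where x0: "x0 \<in> W" "\<mu> x0 \<noteq> 0" by blast
      hence "0 < \<mu> x0 * exp (lam * g x0)" using mupos[of x0] by (simp add: less_le)
      also have "\<dots> \<le> Z lam" unfolding Z_def using finW x0 mupos by (intro member_le_sum) auto
      finally show ?thesis .
    qed
    have "ln (Z lam) \<le> 0" using Z1 Zp by simp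
    moreover have "m \<ge> (\<Sum>x\<in>W. \<mu> x * (-1))" unfolding m_def
      using grange mupos by (intro sum_mono mult_left_mono) auto
    hence "m \<ge> -1" using musum by (simp add: sum_negf)
    moreover have "lam * m \<ge> lam * (-1)" using \<open>m \<ge> -1\<close> lampos by (intro mult_left_mono) auto
    ultimately have "lam * r < lam * 1" using big by linarith
    thus ?thesis using lampos by simp
  qed
  obtain t where t: "r \<le> t" "t \<le> lam" and ph: "t * Zd t / Z t - ln (Z t) \<ge> r / (2 * lam) * t\<^sup>2"
  proof -
    have mp': "\<And>x. x \<in> W \<Longrightarrow> 0 \<le> \<mu> x" using mupos by simp
    have gr': "\<And>x. x \<in> W \<Longrightarrow> -1 \<le> g x \<and> g x \<le> 0" using grange by simp
    have big': "ln (\<Sum>x\<in>W. \<mu> x * exp (lam * g x)) > lam * (\<Sum>x\<in>W. \<mu> x * g x) + lam * r"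
      using big unfolding Z_def m_def .
    from tilt_choice[OF finW mp' musum gr' lampos r big'] show ?thesis
      using that unfolding Z_def Zd_def by blast
  qed
  have tpos: "t > 0" using t r by simp
  have rl: "r / (2 * lam) = 100 / real n" using r npos by (simp add: lam_def field_simps)
  define \<rho>1 where "\<rho>1 x = exp (t * g x) / 2" for x
  define \<rho>2 where "\<rho>2 x = 1 - \<rho>1 x" for x
  have r1W: "0 < \<rho>1 x \<and> \<rho>1 x \<le> 1/2" if "x \<in> W" for x
  proof -
    have "t * g x \<le> 0" using grange[OF that] tpos by (simp add: mult_nonneg_nonpos)
    thus ?thesis by (simp add: \<rho>1_def)
  qed
  have fp: "fuzzy_partition2 n \<rho>1 \<rho>2"
    unfolding fuzzy_partition2_def
  proof (intro ballI)
    fix x :: "nat \<Rightarrow> 'a" assume "x \<in> words n"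
    hence "0 < \<rho>1 x \<and> \<rho>1 x \<le> 1/2" using r1W by (simp add: W_def)
    thus "0 \<le> \<rho>1 x \<and> \<rho>1 x \<le> 1 \<and> 0 \<le> \<rho>2 x \<and> \<rho>2 x \<le> 1 \<and> \<rho>1 x + \<rho>2 x = 1"
      by (simp add: \<rho>2_def)
  qed
  have pos: "\<forall>x\<in>words n. 0 < \<rho>1 x \<and> 0 < \<rho>2 x \<and> \<rho>1 x + \<rho>2 x = 1"
  proof
    fix x :: "nat \<Rightarrow> 'a" assume "x \<in> words n"
    hence "0 < \<rho>1 x \<and> \<rho>1 x \<le> 1/2" using r1W by (simp add: W_def)
    thus "0 < \<rho>1 x \<and> 0 < \<rho>2 x \<and> \<rho>1 x + \<rho>2 x = 1" by (simp add: \<rho>2_def)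
  qed
  define P1 where "P1 = integ n \<mu> \<rho>1"
  have P1Z: "P1 = Z t / 2" unfolding P1_def integ_def Z_def \<rho>1_def W_def
    by (simp add: sum_divide_distrib algebra_simps)
  have P1pos: "P1 > 0" unfolding P1_def using integ_pos[OF mu] pos by auto
  have Zt: "Z t > 0" using P1pos P1Z by simp
  define I where "I = mutual_info2 n \<mu> \<rho>1 \<rho>2"
  have I_ge: "I \<ge> P1 * (t * Zd t / Z t - ln (Z t))"
  proof -
    have "I = (\<Sum>x\<in>W. \<rho>1 x * \<mu> x * ln (\<rho>1 x / P1)) + (\<Sum>x\<in>W. \<rho>2 x * \<mu> x * ln (\<rho>2 x / integ n \<mu> \<rho>2))"
      unfolding I_def mutual_info2_def P1_def W_def
      using PKL[OF mu, of \<rho>1] PKL[OF mu, of \<rho>2] pos by simp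
    moreover have "(\<Sum>x\<in>W. \<rho>2 x * \<mu> x * ln (\<rho>2 x / integ n \<mu> \<rho>2)) \<ge> 0"
    proof -
      have P2: "integ n \<mu> \<rho>2 > 0" using integ_pos[OF mu] pos by auto
      have "(\<Sum>x\<in>W. \<rho>2 x * \<mu> x * (1 - integ n \<mu> \<rho>2 / \<rho>2 x)) \<le> (\<Sum>x\<in>W. \<rho>2 x * \<mu> x * ln (\<rho>2 x / integ n \<mu> \<rho>2))"
      proof (intro sum_mono mult_left_mono)
        fix x assume x: "x \<in> W"
        have "0 < \<rho>2 x" using pos x by (auto simp: W_def)
        thus "1 - integ n \<mu> \<rho>2 / \<rho>2 x \<le> ln (\<rho>2 x / integ n \<mu> \<rho>2)"
          using ln_ge_1m[of "\<rho>2 x / integ n \<mu> \<rho>2"] P2 by simp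
        show "0 \<le> \<rho>2 x * \<mu> x" using \<open>0 < \<rho>2 x\<close> mupos[of x] by simp
      qed
      also have "(\<Sum>x\<in>W. \<rho>2 x * \<mu> x * (1 - integ n \<mu> \<rho>2 / \<rho>2 x)) = (\<Sum>x\<in>W. \<rho>2 x * \<mu> x - integ n \<mu> \<rho>2 * \<mu> x)"
      proof (intro sum.cong refl)
        fix x assume x: "x \<in> W"
        have "0 < \<rho>2 x" using pos x by (auto simp: W_def)
        thus "\<rho>2 x * \<mu> x * (1 - integ n \<mu> \<rho>2 / \<rho>2 x) = \<rho>2 x * \<mu> x - integ n \<mu> \<rho>2 * \<mu> x"
          by (simp add: field_simps)
      qed
      also have "\<dots> = 0" using musum
        by (simp add: sum_subtractf sum_distrib_left[symmetric] integ_def W_def)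
      finally show ?thesis by simp
    qed
    moreover have "(\<Sum>x\<in>W. \<rho>1 x * \<mu> x * ln (\<rho>1 x / P1)) = P1 * (t * Zd t / Z t - ln (Z t))"
    proof -
      have "(\<Sum>x\<in>W. \<rho>1 x * \<mu> x * ln (\<rho>1 x / P1)) = (\<Sum>x\<in>W. (t / 2) * (\<mu> x * (g x * exp (t * g x))) - (ln (Z t) / 2) * (\<mu> x * exp (t * g x)))"
      proof (intro sum.cong refl)
        fix x assume x: "x \<in> W"
        have e: "ln (\<rho>1 x / P1) = t * g x - ln (Z t)" unfolding P1Z \<rho>1_def using Zt by (simp add: ln_div)
        show "\<rho>1 x * \<mu> x * ln (\<rho>1 x / P1) = (t / 2) * (\<mu> x * (g x * exp (t * g x))) - (ln (Z t) / 2) * (\<mu> x * exp (t * g x))"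
          unfolding e by (simp add: \<rho>1_def field_simps)
      qed
      also have "\<dots> = (t / 2) * Zd t - (ln (Z t) / 2) * Z t"
        unfolding Zd_def Z_def by (simp add: sum_subtractf sum_distrib_left)
      also have "\<dots> = P1 * (t * Zd t / Z t - ln (Z t))" using Zt unfolding P1Z by (simp add: field_simps)
      finally show ?thesis .
    qed
    ultimately show ?thesis by simp
  qed
  have "P1 * (r / (2 * lam) * t\<^sup>2) \<le> P1 * (t * Zd t / Z t - ln (Z t))"
    using ph P1pos by (intro mult_left_mono) auto
  hence I_ge2: "I \<ge> P1 * (100 / real n * t\<^sup>2)" using I_ge unfolding rl by linarith
  define d where "d = t / real n"
  have d0: "0 \<le> d" using tpos by (simp add: d_def)
  have dlam: "d \<le> r / 200"
  proof -
    have "t / real n \<le> lam / real n" using t npos by (intro divide_right_mono) auto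
    also have "lam / real n = r / 200" using npos by (simp add: lam_def)
    finally show ?thesis by (simp add: d_def)
  qed
  have d4: "d \<le> 1/4" using dlam r1 by simp
  have cmi_le: "cmi n \<mu> \<rho>1 \<rho>2 i \<le> 32 * d\<^sup>2 * P1" if i: "i < n" for i
    unfolding P1_def
  proof (rule cmi_bound[OF mu _ d0 d4])
    show "\<forall>x\<in>words n. 0 < \<rho>1 x \<and> \<rho>1 x \<le> 1 / 2 \<and> \<rho>2 x = 1 - \<rho>1 x"
      using r1W by (auto simp: \<rho>2_def W_def)
    show "\<forall>x\<in>words n. \<forall>y\<in>fib n i x. \<rho>1 x * exp (- d) \<le> \<rho>1 y \<and> \<rho>1 y \<le> \<rho>1 x * exp d"
    proof (intro ballI)
      fix x y :: "nat \<Rightarrow> 'a" assume x: "x \<in> words n" and y: "y \<in> fib n i x"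
      have yW: "y \<in> W" using y fib_sub unfolding W_def by blast
      have h1: "hamming n x y \<le> 1 / real n" by (rule fib_hamming[OF i y])
      have xW: "x \<in> W" using x by (simp add: W_def)
      have "g y - g x \<le> hamming n y x" by (rule glip[OF yW xW])
      hence "g y - g x \<le> 1 / real n" using h1 hamming_sym[of n x y] by linarith
      moreover have "g x - g y \<le> 1 / real n" using glip[of x y] x yW h1 by (auto simp: W_def)
      ultimately have "t * (g y - g x) \<le> t * (1 / real n)" "t * (g x - g y) \<le> t * (1 / real n)"
        using tpos by (intro mult_left_mono; simp)+
      hence "t * g y \<le> t * g x + d" "t * g x - d \<le> t * g y"
        unfolding d_def by (simp_all add: right_diff_distrib)
      hence "exp (t * g y) \<le> exp (t * g x + d)" "exp (t * g x + - d) \<le> exp (t * g y)" by simp_all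
      thus "\<rho>1 x * exp (- d) \<le> \<rho>1 y \<and> \<rho>1 y \<le> \<rho>1 x * exp d"
        unfolding \<rho>1_def exp_add by simp
    qed
  qed
  have sum_cmi: "(\<Sum>i<n. cmi n \<mu> \<rho>1 \<rho>2 i) \<le> 32 * t\<^sup>2 / real n * P1"
  proof -
    have "(\<Sum>i<n. cmi n \<mu> \<rho>1 \<rho>2 i) \<le> (\<Sum>i<n. 32 * d\<^sup>2 * P1)" by (intro sum_mono cmi_le) auto
    also have "\<dots> = real n * (32 * d\<^sup>2 * P1)" by simp
    also have "\<dots> = 32 * t\<^sup>2 / real n * P1" using npos by (simp add: d_def power2_eq_square field_simps)
    finally show ?thesis .
  qed
  have cmi_half: "(\<Sum>i<n. cmi n \<mu> \<rho>1 \<rho>2 i) \<le> I / 2"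
  proof -
    have "32 * t\<^sup>2 / real n * P1 \<le> P1 * (100 / real n * t\<^sup>2) / 2"
      using P1pos npos by (simp add: field_simps)
    moreover have "P1 * (100 / real n * t\<^sup>2) / 2 \<le> I / 2" using I_ge2 by (intro divide_right_mono) auto
    ultimately show ?thesis using sum_cmi by linarith
  qed
  have dtc: "integ n \<mu> \<rho>1 * DTC n (cond_meas n \<mu> \<rho>1) + integ n \<mu> \<rho>2 * DTC n (cond_meas n \<mu> \<rho>2)
        \<le> DTC n \<mu> - mutual_info2 n \<mu> \<rho>1 \<rho>2 / 2"
    using ident[OF mu pos] cmi_half unfolding I_def by linarith
  have P1low: "P1 \<ge> exp (- real n) / 2"
  proof -
    have "Z t \<ge> (\<Sum>x\<in>W. \<mu> x * exp (- t))" unfolding Z_def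
    proof (intro sum_mono mult_left_mono)
      fix x assume "x \<in> W"
      hence "t * (-1) \<le> t * g x" using grange tpos by (intro mult_left_mono) auto
      hence "- t \<le> t * g x" by simp
      thus "exp (- t) \<le> exp (t * g x)" by simp
    qed (use mupos in auto)
    hence "Z t \<ge> exp (- t)" using musum by (simp add: sum_distrib_right[symmetric])
    moreover have "t \<le> real n"
    proof -
      have "r * real n \<le> 1 * real n" using r1 by (intro mult_right_mono) auto
      hence "lam \<le> real n" unfolding lam_def by simp
      thus ?thesis using t by simp
    qed
    hence "exp (- real n) \<le> exp (- t)" by simp
    ultimately show ?thesis using P1Z by linarith
  qed
  have "r\<^sup>2 / real n * exp (- real n) \<le> P1 * (100 / real n * t\<^sup>2)"
  proof -
    have "r\<^sup>2 \<le> t\<^sup>2" using t r by (intro power_mono) auto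
    hence "r\<^sup>2 \<le> 50 * t\<^sup>2" using zero_le_power2[of t] by linarith
    hence "r\<^sup>2 / real n \<le> (50 * t\<^sup>2) / real n" using npos by (intro divide_right_mono) auto
    hence a: "r\<^sup>2 / real n \<le> 100 / real n * t\<^sup>2 / 2" by simp
    have "r\<^sup>2 / real n * exp (- real n) \<le> (100 / real n * t\<^sup>2 / 2) * (2 * P1)"
      using a P1low by (intro mult_mono) auto
    thus ?thesis by (simp add: algebra_simps)
  qed
  hence "mutual_info2 n \<mu> \<rho>1 \<rho>2 \<ge> r\<^sup>2 / real n * exp (- real n)" using I_ge2 unfolding I_def by linarith
  thus ?thesis using fp dtc by blast
qed


end
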